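(* Let $n$ be a positive integer. Then the map $r\mapsto r\cdot e^{(n)}_{n,\mathbb{H}}$, for $r\in\mathrm{Sym}^n\mathbb{C}[e_1]$, is an isomorphism of $\mathbb{C}$-algebras $$\mathrm{Sym}^n\mathbb{C}[e_1]\xrightarrow{\ \sim\ }\mathrm{Sym}^n\mathbb{C}[e_1]\cdot e^{(n)}_{n,\mathbb{H}}.$$
   Context: $\mathbb{H}$ is the real quaternion algebra with basis $e_0=1,e_1,e_2,e_3$, $e_1^2=e_2^2=e_3^2=-1$, $e_1e_2=-e_2e_1=e_3$, $e_2e_3=-e_3e_2=e_1$, $e_3e_1=-e_1e_3=e_2$; $\mathbb{H}_\mathbb{C}=\mathbb{H}\otimes_\mathbb{R}\mathbb{C}$ and $\mathbb{C}[e_1]\subset\mathbb{H}_\mathbb{C}$ is the $\mathbb{C}$-span of $1,e_1$. $\mathbb{H}_\mathbb{C}^{\otimes n}$ is the tensor power over $\mathbb{C}$ with componentwise multiplication, $\mathfrak S_n$ acts by permuting factors, $x^\vee=\frac1{n!}\sum_\sigma\sigma(x)$, and $\mathrm{Sym}^n\mathbb{C}[e_1]\subset\mathrm{Sym}^n\mathbb{H}_\mathbb{C}$ are the subalgebras of fixed tensors. Let $\triangle_\mathbb{H}=\frac14\sum_{i=0}^3e_i\otimes e_i$, and for $n\ge2$, $\triangle^{(n)}_\mathbb{H}=(\triangle_\mathbb{H}\otimes1^{\otimes(n-2)})^\vee$ (central in $\mathrm{Sym}^n\mathbb{H}_\mathbb{C}$), $\beta^{(n)}_{m}=\frac{2(n-m)(2m+2)}{4n(n-1)}$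 for $\lceil n/2\rceil\le m\le n$, and $e^{(n)}_{n,\mathbb{H}}=\prod_{\lceil n/2\rceil\le m'\le n-1}\frac{\triangle^{(n)}_\mathbb{H}-\beta^{(n)}_{m'}1^{\otimes n}}{\beta^{(n)}_{n}-\beta^{(n)}_{m'}}$; for $n=1$, $e^{(1)}_{1,\mathbb{H}}=1$. $\mathrm{Sym}^n\mathbb{C}[e_1]\cdot e^{(n)}_{n,\mathbb{H}}=\{re^{(n)}_{n,\mathbb{H}}:r\in\mathrm{Sym}^n\mathbb{C}[e_1]\}$, an algebra with unit $e^{(n)}_{n,\mathbb{H}}$. *)

theory Defs
  imports "HOL-Combinatorics.Permutations" Complex_Main
begin

text \<open>Concrete model of the tensor power of the complexified quaternions.
  Basis of H: e_0 = 1, e_1, e_2, e_3 (indices 0..3).  A basis of the n-th tensor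
  power is given by words (lists) of length n over the letters 0..3; an element of
  the tensor power is its coefficient function on words (zero outside words n).\<close>

definition words :: "nat \<Rightarrow> nat list set" where
  "words n = {w. length w = n \<and> set w \<subseteq> {0..3}}"

definition tcarrier :: "nat \<Rightarrow> (nat list \<Rightarrow> complex) set" where
  "tcarrier n = {x. \<forall>w. w \<notin> words n \<longrightarrow> x w = 0}"

text \<open>Quaternion basis multiplication: e_a e_b = qsgn a b * e_(qidx a b).\<close>
definition qidx :: "nat \<Rightarrow> nat \<Rightarrow> nat" where
  "qidx a b = (if a = 0 then b else if b = 0 then a else if a = b then 0 else 6 - a - b)"

definition qsgn :: "nat \<Rightarrow> nat \<Rightarrow> complex" where
  "qsgn a b = (if a = 0 \<or> b = 0 then 1 else if a = b then -1
     else if (a, b) \<in> {(1,2),(2,3),(3,1)} then 1 else -1)"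

definition wsgn :: "nat list \<Rightarrow> nat list \<Rightarrow> complex" where
  "wsgn w v = prod_list (map2 qsgn w v)"

definition tmul :: "nat \<Rightarrow> (nat list \<Rightarrow> complex) \<Rightarrow> (nat list \<Rightarrow> complex) \<Rightarrow> (nat list \<Rightarrow> complex)" where
  "tmul n x y = (\<lambda>u. \<Sum>w\<in>words n. \<Sum>v\<in>words n.
      if map2 qidx w v = u then wsgn w v * x w * y v else 0)"

definition tadd :: "(nat list \<Rightarrow> complex) \<Rightarrow> (nat list \<Rightarrow> complex) \<Rightarrow> (nat list \<Rightarrow> complex)" where
  "tadd x y = (\<lambda>w. x w + y w)"

definition tscale :: "complex \<Rightarrow> (nat list \<Rightarrow> complex) \<Rightarrow> (nat list \<Rightarrow> complex)" where
  "tscale c x = (\<lambda>w. c * x w)"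

definition tone :: "nat \<Rightarrow> nat list \<Rightarrow> complex" where
  "tone n = (\<lambda>w. if w = replicate n 0 then 1 else 0)"

definition wperm :: "nat \<Rightarrow> (nat \<Rightarrow> nat) \<Rightarrow> nat list \<Rightarrow> nat list" where
  "wperm n \<sigma> w = map (\<lambda>i. w ! \<sigma> i) [0..<n]"

definition tsym :: "nat \<Rightarrow> (nat list \<Rightarrow> complex) \<Rightarrow> (nat list \<Rightarrow> complex)" where
  "tsym n x = (\<lambda>w. if w \<in> words n then
      (1 / of_nat (fact n)) * (\<Sum>\<sigma>\<in>{\<sigma>. \<sigma> permutes {..<n}}. x (wperm n \<sigma> w)) else 0)"

definition SymC :: "nat \<Rightarrow> (nat list \<Rightarrow> complex) set" where
  "SymC n = {x \<in> tcarrier n.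
      (\<forall>\<sigma>. \<sigma> permutes {..<n} \<longrightarrow> (\<forall>w\<in>words n. x (wperm n \<sigma> w) = x w)) \<and>
      (\<forall>w. x w \<noteq> 0 \<longrightarrow> set w \<subseteq> {0,1})}"

text \<open>\<triangle>_H \<otimes> 1^{\<otimes>(n-2)}, with \<triangle>_H = 1/4 \<Sum>_i e_i \<otimes> e_i.\<close>
definition deltaH0 :: "nat \<Rightarrow> nat list \<Rightarrow> complex" where
  "deltaH0 n = (\<lambda>w. if (\<exists>i<4. w = [i, i] @ replicate (n - 2) 0) then 1/4 else 0)"

definition deltaH :: "nat \<Rightarrow> nat list \<Rightarrow> complex" where
  "deltaH n = tsym n (deltaH0 n)"

definition beta :: "nat \<Rightarrow> nat \<Rightarrow> complex" where
  "beta n m = of_real ((2 * (real n - real m) * (2 * real m + 2)) / (4 * real n * (real n - 1)))"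

text \<open>e^{(n)}_{n,H}; the index range \<lceil>n/2\<rceil> \<le> m' \<le> n-1 is [(n+1) div 2 ..< n].\<close>
definition eH :: "nat \<Rightarrow> nat list \<Rightarrow> complex" where
  "eH n = (if n = 1 then tone n else
     foldr (\<lambda>m acc. tmul n
        (tscale (1 / (beta n n - beta n m)) (tadd (deltaH n) (tscale (- beta n m) (tone n)))) acc)
      [(n + 1) div 2..<n] (tone n))"

end

theory Submission
  imports Defs
begin

definition bwords :: "nat \<Rightarrow> nat list set" where
  "bwords n = {w. length w = n \<and> set w \<subseteq> {0,1}}"

lemma words_0: "words 0 = {[]}" by (auto simp: words_def)
lemma bwords_0: "bwords 0 = {[]}" by (auto simp: bwords_def)

lemma words_Suc: "words (Suc n) = (\<lambda>(a,w). a#w) ` ({0..3} \<times> words n)"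
  by (auto simp: words_def image_iff length_Suc_conv)

lemma bwords_Suc: "bwords (Suc n) = (\<lambda>(a,w). a#w) ` ({0,1} \<times> bwords n)"
  by (auto simp: bwords_def image_iff length_Suc_conv)

lemma finite_words[simp]: "finite (words n)"
  by (induction n) (auto simp: words_0 words_Suc)

lemma finite_bwords[simp]: "finite (bwords n)"
  by (induction n) (auto simp: bwords_0 bwords_Suc)

lemma bwords_words: "u \<in> bwords n \<Longrightarrow> u \<in> words n"
  by (auto simp: bwords_def words_def)

lemma sum_words_Suc: "(\<Sum>w\<in>words (Suc n). f w) = (\<Sum>a\<in>{0..3}. \<Sum>w\<in>words n. f (a#w))"
proof -
  have "inj_on (\<lambda>(a,w). a#w) ({0..3::nat} \<times> words n)" by (auto simp: inj_on_def)
  then show ?thesis unfolding words_Suc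
    by (simp add: sum.reindex sum.cartesian_product case_prod_beta')
qed

lemma sum_bwords_Suc: "(\<Sum>w\<in>bwords (Suc n). f w) = (\<Sum>w\<in>bwords n. f (0#w) + f (1#w))"
proof -
  have "inj_on (\<lambda>(a,w). a#w) ({0,1::nat} \<times> bwords n)" by (auto simp: inj_on_def)
  then have "(\<Sum>w\<in>bwords (Suc n). f w) = (\<Sum>a\<in>{0,1}. \<Sum>w\<in>bwords n. f (a#w))"
    unfolding bwords_Suc by (simp add: sum.reindex sum.cartesian_product case_prod_beta')
  also have "\<dots> = (\<Sum>w\<in>bwords n. f (0#w) + f (1#w))" by (simp add: sum.distrib)
  finally show ?thesis .
qed

lemma words_Cons: "(a#w) \<in> words (Suc n) \<longleftrightarrow> a \<le> 3 \<and> w \<in> words n"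
  by (auto simp: words_def)
lemma bwords_Cons: "(a#w) \<in> bwords (Suc n) \<longleftrightarrow> a \<le> 1 \<and> w \<in> bwords n"
  by (auto simp: bwords_def)
lemma words_SucE: "w \<in> words (Suc n) \<Longrightarrow> \<exists>a w'. w = a#w' \<and> a \<le> 3 \<and> w' \<in> words n"
  by (cases w) (auto simp: words_def)
lemma bwords_SucE: "w \<in> bwords (Suc n) \<Longrightarrow> \<exists>a w'. w = a#w' \<and> a \<le> 1 \<and> w' \<in> bwords n"
  by (cases w) (auto simp: bwords_def)

lemma sum_delta_mult1: "finite S \<Longrightarrow> (\<Sum>w\<in>S. (if w = a then 1 else 0) * f w) = (if a \<in> S then (f a::complex) else 0)"
proof -
  assume "finite S"
  have "(\<Sum>w\<in>S. (if w = a then 1 else 0) * f w) = (\<Sum>w\<in>S. if w = a then f w else 0)"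
    by (intro sum.cong) auto
  then show ?thesis using \<open>finite S\<close> by (simp add: sum.delta)
qed

lemma sum_delta_mult2: "finite S \<Longrightarrow> (\<Sum>w\<in>S. f w * (if w = a then 1 else 0)) = (if a \<in> S then (f a::complex) else 0)"
  using sum_delta_mult1[of S a f] by (simp add: mult.commute)

lemma sum_delta_mult3: "finite S \<Longrightarrow> (\<Sum>w\<in>S. (if a = w then 1 else 0) * f w) = (if a \<in> S then (f a::complex) else 0)"
  using sum_delta_mult1[of S a f] by (simp add: eq_commute)

lemma sum_delta_mult4: "finite S \<Longrightarrow> (\<Sum>w\<in>S. f w * (if a = w then 1 else 0)) = (if a \<in> S then (f a::complex) else 0)"
  using sum_delta_mult1[of S a f] by (simp add: mult.commute eq_commute)

definition Mq :: "nat \<Rightarrow> nat \<Rightarrow> nat \<Rightarrow> complex" where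
  "Mq a b c = (if a = 0 then (if b = c then 1 else 0)
    else if a = 1 then (if b = c then (if b = 0 then \<i> else -\<i>) else 0)
    else if a = 2 then (if b = 0 \<and> c = 1 then 1 else if b = 1 \<and> c = 0 then -1 else 0)
    else (if b \<noteq> c then \<i> else 0))"

lemma le3_cases: "(a::nat) \<le> 3 \<Longrightarrow> a = 0 \<or> a = 1 \<or> a = 2 \<or> a = 3" by auto
lemma le1_cases: "(a::nat) \<le> 1 \<Longrightarrow> a = 0 \<or> a = 1" by auto

lemma Mq_mult:
  assumes "a \<le> 3" "a' \<le> 3" "c \<le> 1" "d \<le> 1"
  shows "Mq a c 0 * Mq a' 0 d + Mq a c 1 * Mq a' 1 d = qsgn a a' * Mq (qidx a a') c d"
  using le3_cases[OF assms(1)] le3_cases[OF assms(2)] le1_cases[OF assms(3)] le1_cases[OF assms(4)]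
  by (elim disjE; simp add: Mq_def qsgn_def qidx_def)

lemma Mq_orth:
  assumes "a \<le> 3" "a' \<le> 3"
  shows "cnj (Mq a 0 0) * Mq a' 0 0 + cnj (Mq a 0 1) * Mq a' 0 1 + cnj (Mq a 1 0) * Mq a' 1 0
       + cnj (Mq a 1 1) * Mq a' 1 1 = (if a = a' then 2 else 0)"
  using le3_cases[OF assms(1)] le3_cases[OF assms(2)]
  by (elim disjE; simp add: Mq_def)

fun kr :: "nat list \<Rightarrow> nat list \<Rightarrow> nat list \<Rightarrow> complex" where
  "kr (a#w) (b#u) (c#v) = Mq a b c * kr w u v"
| "kr _ _ _ = 1"

lemma qidx_le: "a \<le> 3 \<Longrightarrow> b \<le> 3 \<Longrightarrow> qidx a b \<le> 3"
  by (auto simp: qidx_def)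

lemma map2_qidx_words: "w \<in> words n \<Longrightarrow> v \<in> words n \<Longrightarrow> map2 qidx w v \<in> words n"
proof (induction n arbitrary: w v)
  case 0 then show ?case by (simp add: words_0)
next
  case (Suc n)
  from words_SucE[OF Suc.prems(1)] words_SucE[OF Suc.prems(2)] Suc.IH show ?case
    by (auto simp: words_Cons qidx_le)
qed

lemma kr_mult:
  assumes "w \<in> words n" "w' \<in> words n" "u \<in> bwords n" "t \<in> bwords n"
  shows "(\<Sum>v\<in>bwords n. kr w u v * kr w' v t) = wsgn w w' * kr (map2 qidx w w') u t"
  using assms
proof (induction n arbitrary: w w' u t)
  case 0 then show ?case by (simp add: words_0 bwords_0 wsgn_def)
next
  case (Suc n)
  obtain a w0 where w: "w = a#w0" "a \<le> 3" "w0 \<in> words n" using words_SucE[OF Suc.prems(1)] by blast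
  obtain a' w0' where w': "w' = a'#w0'" "a' \<le> 3" "w0' \<in> words n" using words_SucE[OF Suc.prems(2)] by blast
  obtain c u0 where u: "u = c#u0" "c \<le> 1" "u0 \<in> bwords n" using bwords_SucE[OF Suc.prems(3)] by blast
  obtain d t0 where t: "t = d#t0" "d \<le> 1" "t0 \<in> bwords n" using bwords_SucE[OF Suc.prems(4)] by blast
  have "(\<Sum>v\<in>bwords (Suc n). kr w u v * kr w' v t)
      = (\<Sum>v\<in>bwords n. (Mq a c 0 * Mq a' 0 d + Mq a c 1 * Mq a' 1 d) * (kr w0 u0 v * kr w0' v t0))"
    unfolding sum_bwords_Suc w u w' t by (simp add: algebra_simps)
  also have "\<dots> = (Mq a c 0 * Mq a' 0 d + Mq a c 1 * Mq a' 1 d) * (\<Sum>v\<in>bwords n. kr w0 u0 v * kr w0' v t0)"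
    by (simp add: sum_distrib_left)
  also have "\<dots> = qsgn a a' * Mq (qidx a a') c d * (wsgn w0 w0' * kr (map2 qidx w0 w0') u0 t0)"
    using Suc.IH[OF w(3) w'(3) u(3) t(3)] Mq_mult[OF w(2) w'(2) u(2) t(2)] by simp
  also have "\<dots> = wsgn w w' * kr (map2 qidx w w') u t"
    by (simp add: w w' u t wsgn_def)
  finally show ?case .
qed

lemma kr_orth:
  assumes "w \<in> words n" "w' \<in> words n"
  shows "(\<Sum>u\<in>bwords n. \<Sum>v\<in>bwords n. cnj (kr w u v) * kr w' u v) = 2^n * (if w = w' then 1 else 0)"
  using assms
proof (induction n arbitrary: w w')
  case 0 then show ?case by (simp add: words_0 bwords_0)
next
  case (Suc n)
  obtain a w0 where w: "w = a#w0" "a \<le> 3" "w0 \<in> words n" using words_SucE[OF Suc.prems(1)] by blast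
  obtain a' w0' where w': "w' = a'#w0'" "a' \<le> 3" "w0' \<in> words n" using words_SucE[OF Suc.prems(2)] by blast
  let ?C = "cnj (Mq a 0 0) * Mq a' 0 0 + cnj (Mq a 0 1) * Mq a' 0 1 + cnj (Mq a 1 0) * Mq a' 1 0
       + cnj (Mq a 1 1) * Mq a' 1 1"
  have "(\<Sum>u\<in>bwords (Suc n). \<Sum>v\<in>bwords (Suc n). cnj (kr w u v) * kr w' u v)
     = (\<Sum>u\<in>bwords n. \<Sum>v\<in>bwords n. ?C * (cnj (kr w0 u v) * kr w0' u v))"
    unfolding sum_bwords_Suc w w' by (simp add: sum.distrib[symmetric] algebra_simps)
  also have "\<dots> = ?C * (\<Sum>u\<in>bwords n. \<Sum>v\<in>bwords n. cnj (kr w0 u v) * kr w0' u v)"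
    by (simp add: sum_distrib_left)
  also have "\<dots> = 2^Suc n * (if w = w' then 1 else 0)"
    using Suc.IH[OF w(3) w'(3)] Mq_orth[OF w(2) w'(2)] by (simp add: w w')
  finally show ?case .
qed


definition phi :: "nat \<Rightarrow> (nat list \<Rightarrow> complex) \<Rightarrow> nat list \<Rightarrow> nat list \<Rightarrow> complex" where
  "phi n x u v = (\<Sum>w\<in>words n. x w * kr w u v)"

lemma phi_tmul:
  assumes "u \<in> bwords n" "t \<in> bwords n"
  shows "phi n (tmul n x y) u t = (\<Sum>v\<in>bwords n. phi n x u v * phi n y v t)"
proof -
  have "phi n (tmul n x y) u t = (\<Sum>z\<in>words n. \<Sum>w\<in>words n. \<Sum>w'\<in>words n.
      (if map2 qidx w w' = z then wsgn w w' * x w * y w' * kr z u t else 0))"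
    unfolding phi_def tmul_def sum_distrib_right by (intro sum.cong refl) auto
  also have "\<dots> = (\<Sum>w\<in>words n. \<Sum>w'\<in>words n. \<Sum>z\<in>words n.
      (if map2 qidx w w' = z then wsgn w w' * x w * y w' * kr z u t else 0))"
    by (rule trans[OF sum.swap], rule sum.cong[OF refl], rule sum.swap)
  also have "\<dots> = (\<Sum>w\<in>words n. \<Sum>w'\<in>words n. wsgn w w' * x w * y w' * kr (map2 qidx w w') u t)"
    by (intro sum.cong refl) (simp add: sum.delta' map2_qidx_words)
  also have "\<dots> = (\<Sum>w\<in>words n. \<Sum>w'\<in>words n. x w * y w' * (\<Sum>v\<in>bwords n. kr w u v * kr w' v t))"
    by (intro sum.cong refl) (simp add: kr_mult assms)
  also have "\<dots> = (\<Sum>w\<in>words n. \<Sum>w'\<in>words n. \<Sum>v\<in>bwords n. x w * kr w u v * (y w' * kr w' v t))"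
    by (intro sum.cong refl) (simp add: sum_distrib_left algebra_simps)
  also have "\<dots> = (\<Sum>v\<in>bwords n. \<Sum>w\<in>words n. \<Sum>w'\<in>words n. x w * kr w u v * (y w' * kr w' v t))"
    by (rule trans[OF sum.cong[OF refl] sum.swap], rule sum.swap)
  also have "\<dots> = (\<Sum>v\<in>bwords n. phi n x u v * phi n y v t)"
    unfolding phi_def by (simp add: sum_product)
  finally show ?thesis .
qed

definition op :: "nat \<Rightarrow> (nat list \<Rightarrow> complex) \<Rightarrow> (nat list \<Rightarrow> complex) \<Rightarrow> nat list \<Rightarrow> complex" where
  "op n x z = (\<lambda>u. if u \<in> bwords n then \<Sum>v\<in>bwords n. phi n x u v * z v else 0)"

lemma op_tmul: "op n (tmul n x y) z = op n x (op n y z)"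
proof (rule ext)
  fix u
  show "op n (tmul n x y) z u = op n x (op n y z) u"
  proof (cases "u \<in> bwords n")
    case True
    have "op n (tmul n x y) z u = (\<Sum>v\<in>bwords n. \<Sum>t\<in>bwords n. phi n x u t * (phi n y t v * z v))"
      using True by (simp add: op_def phi_tmul sum_distrib_right sum_distrib_left algebra_simps)
    also have "\<dots> = (\<Sum>t\<in>bwords n. \<Sum>v\<in>bwords n. phi n x u t * (phi n y t v * z v))"
      by (rule sum.swap)
    also have "\<dots> = op n x (op n y z) u"
      using True by (simp add: op_def sum_distrib_left)
    finally show ?thesis .
  qed (simp add: op_def)
qed

lemma op_outside: "u \<notin> bwords n \<Longrightarrow> op n x z u = 0"
  by (simp add: op_def)

lemma phi_inv:
  assumes "x \<in> tcarrier n" "w \<in> words n"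
  shows "(\<Sum>u\<in>bwords n. \<Sum>v\<in>bwords n. cnj (kr w u v) * phi n x u v) = 2^n * x w"
proof -
  have "(\<Sum>u\<in>bwords n. \<Sum>v\<in>bwords n. cnj (kr w u v) * phi n x u v)
     = (\<Sum>u\<in>bwords n. \<Sum>v\<in>bwords n. \<Sum>w'\<in>words n. x w' * (cnj (kr w u v) * kr w' u v))"
    unfolding phi_def by (simp add: sum_distrib_left algebra_simps)
  also have "\<dots> = (\<Sum>w'\<in>words n. x w' * (\<Sum>u\<in>bwords n. \<Sum>v\<in>bwords n. cnj (kr w u v) * kr w' u v))"
  proof -
    have "(\<Sum>u\<in>bwords n. \<Sum>v\<in>bwords n. \<Sum>w'\<in>words n. x w' * (cnj (kr w u v) * kr w' u v))
       = (\<Sum>u\<in>bwords n. \<Sum>w'\<in>words n. \<Sum>v\<in>bwords n. x w' * (cnj (kr w u v) * kr w' u v))"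
      by (rule sum.cong[OF refl], rule sum.swap)
    also have "\<dots> = (\<Sum>w'\<in>words n. \<Sum>u\<in>bwords n. \<Sum>v\<in>bwords n. x w' * (cnj (kr w u v) * kr w' u v))"
      by (rule sum.swap)
    finally show ?thesis by (simp add: sum_distrib_left)
  qed
  also have "\<dots> = (\<Sum>w'\<in>words n. (if w = w' then 1 else 0) * (2^n * x w'))"
    by (intro sum.cong refl) (simp add: kr_orth assms)
  also have "\<dots> = 2^n * x w" using assms(2)
    by (simp add: sum_delta_mult3)
  finally show ?thesis .
qed

lemma op_delta: "u \<in> bwords n \<Longrightarrow> v \<in> bwords n \<Longrightarrow> op n x (\<lambda>t. if t = v then 1 else 0) u = phi n x u v"
  by (simp add: op_def sum_delta_mult2)

lemma op_inj:
  assumes "x \<in> tcarrier n" "y \<in> tcarrier n" "\<And>z. op n x z = op n y z"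
  shows "x = y"
proof (rule ext)
  fix w
  show "x w = y w"
  proof (cases "w \<in> words n")
    case True
    have "\<And>u v. u \<in> bwords n \<Longrightarrow> v \<in> bwords n \<Longrightarrow> phi n x u v = phi n y u v"
      using op_delta assms(3) by metis
    then have "(2::complex)^n * x w = 2^n * y w"
      using phi_inv[OF assms(1) True] phi_inv[OF assms(2) True]
      by (metis (no_types, lifting) sum.cong)
    then show ?thesis by simp
  next
    case False then show ?thesis using assms(1,2) by (simp add: tcarrier_def)
  qed
qed

lemma kr_zero: "length u = n \<Longrightarrow> length v = n \<Longrightarrow> kr (replicate n 0) u v = (if u = v then 1 else 0)"
proof (induction n arbitrary: u v)
  case 0 then show ?case by simp
next
  case (Suc n)
  then obtain b u' c v' where "u = b#u'" "v = c#v'" "length u' = n" "length v' = n"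
    by (metis length_Suc_conv)
  with Suc.IH show ?case by (simp add: Mq_def)
qed

lemma replicate_words: "replicate n 0 \<in> words n"
  by (auto simp: words_def set_replicate_conv_if)

lemma phi_tone: "u \<in> bwords n \<Longrightarrow> v \<in> bwords n \<Longrightarrow> phi n (tone n) u v = (if u = v then 1 else 0)"
  unfolding phi_def tone_def
  by (simp add: sum_delta_mult1 replicate_words kr_zero bwords_def)

definition restr :: "nat \<Rightarrow> (nat list \<Rightarrow> complex) \<Rightarrow> nat list \<Rightarrow> complex" where
  "restr n z = (\<lambda>u. if u \<in> bwords n then z u else 0)"

lemma op_tone: "op n (tone n) z = restr n z"
proof (rule ext)
  fix u show "op n (tone n) z u = restr n z u"
  proof (cases "u \<in> bwords n")
    case True
    have "op n (tone n) z u = (\<Sum>v\<in>bwords n. (if u = v then 1 else 0) * z v)"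
      using True by (simp add: op_def phi_tone)
    also have "\<dots> = z u" using True by (simp add: sum_delta_mult3)
    finally show ?thesis using True by (simp add: restr_def)
  qed (simp add: op_def restr_def)
qed

lemma phi_tadd: "phi n (tadd x y) u v = phi n x u v + phi n y u v"
  by (simp add: phi_def tadd_def sum.distrib algebra_simps)

lemma phi_tscale: "phi n (tscale c x) u v = c * phi n x u v"
  by (simp add: phi_def tscale_def sum_distrib_left algebra_simps)

lemma op_tadd: "op n (tadd x y) z = (\<lambda>u. op n x z u + op n y z u)"
  by (rule ext) (simp add: op_def phi_tadd sum.distrib algebra_simps)

lemma op_tscale: "op n (tscale c x) z = (\<lambda>u. c * op n x z u)"
  by (rule ext) (simp add: op_def phi_tscale sum_distrib_left algebra_simps)


section \<open>Permutations of positions\<close>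

lemma wperm_length[simp]: "length (wperm n \<sigma> w) = n"
  by (simp add: wperm_def)

lemma wperm_nth[simp]: "i < n \<Longrightarrow> wperm n \<sigma> w ! i = w ! \<sigma> i"
  by (simp add: wperm_def)

lemma wperm_inv1:
  assumes "\<sigma> permutes {..<n}" "length w = n"
  shows "wperm n (inv \<sigma>) (wperm n \<sigma> w) = w"
proof (rule nth_equalityI)
  show "length (wperm n (inv \<sigma>) (wperm n \<sigma> w)) = length w" using assms by simp
  fix i assume "i < length (wperm n (inv \<sigma>) (wperm n \<sigma> w))"
  then have i: "i < n" by simp
  have "inv \<sigma> i < n" using permutes_in_image[OF permutes_inv[OF assms(1)]] i by simp
  then show "wperm n (inv \<sigma>) (wperm n \<sigma> w) ! i = w ! i"
    using i by (simp add: permutes_inverses[OF assms(1)])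
qed

lemma wperm_inv2:
  assumes "\<sigma> permutes {..<n}" "length w = n"
  shows "wperm n \<sigma> (wperm n (inv \<sigma>) w) = w"
  using wperm_inv1[OF permutes_inv[OF assms(1)] assms(2)] permutes_inv_inv[OF assms(1)] by simp

lemma wperm_set:
  assumes "\<sigma> permutes {..<n}" "length w = n" shows "set (wperm n \<sigma> w) \<subseteq> set w"
proof
  fix x assume "x \<in> set (wperm n \<sigma> w)"
  then obtain i where i: "i < n" "x = w ! \<sigma> i" by (auto simp: wperm_def)
  have "\<sigma> i < n" using permutes_in_image[OF assms(1), of i] i(1) by simp
  then show "x \<in> set w" using i(2) assms(2) by simp
qed

lemma wperm_words: "\<sigma> permutes {..<n} \<Longrightarrow> w \<in> words n \<Longrightarrow> wperm n \<sigma> w \<in> words n"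
  using wperm_set[of \<sigma> n w] by (auto simp: words_def)

lemma wperm_bwords: "\<sigma> permutes {..<n} \<Longrightarrow> w \<in> bwords n \<Longrightarrow> wperm n \<sigma> w \<in> bwords n"
  using wperm_set[of \<sigma> n w] by (auto simp: bwords_def)

lemma wperm_inj:
  assumes "\<sigma> permutes {..<n}" "length u = n" "length v = n"
  shows "wperm n \<sigma> u = wperm n \<sigma> v \<longleftrightarrow> u = v"
  using wperm_inv1[OF assms(1) assms(2)] wperm_inv1[OF assms(1) assms(3)] by metis

lemma wperm_bij:
  assumes "\<sigma> permutes {..<n}"
  shows "bij_betw (wperm n \<sigma>) (words n) (words n)"
proof (rule bij_betw_byWitness[where f' = "wperm n (inv \<sigma>)"])
  show "\<forall>w\<in>words n. wperm n (inv \<sigma>) (wperm n \<sigma> w) = w" using wperm_inv1[OF assms] by (auto simp: words_def)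
  show "\<forall>w\<in>words n. wperm n \<sigma> (wperm n (inv \<sigma>) w) = w" using wperm_inv2[OF assms] by (auto simp: words_def)
  show "wperm n \<sigma> ` words n \<subseteq> words n" using wperm_words[OF assms] by auto
  show "wperm n (inv \<sigma>) ` words n \<subseteq> words n" using wperm_words[OF permutes_inv[OF assms]] by auto
qed

lemma kr_prod: "length w = n \<Longrightarrow> length u = n \<Longrightarrow> length v = n \<Longrightarrow>
  kr w u v = (\<Prod>i<n. Mq (w!i) (u!i) (v!i))"
proof (induction n arbitrary: w u v)
  case 0 then show ?case by simp
next
  case (Suc n)
  from Suc.prems(1) obtain a w' where w: "w = a#w'" "length w' = n" by (cases w) auto
  from Suc.prems(2) obtain b u' where u: "u = b#u'" "length u' = n" by (cases u) auto
  from Suc.prems(3) obtain c v' where v: "v = c#v'" "length v' = n" by (cases v) auto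
  have "kr w u v = Mq a b c * kr w' u' v'" by (simp add: w u v)
  also have "\<dots> = Mq a b c * (\<Prod>i<n. Mq (w'!i) (u'!i) (v'!i))" using Suc.IH[OF w(2) u(2) v(2)] by simp
  also have "\<dots> = (\<Prod>i<Suc n. Mq (w!i) (u!i) (v!i))" by (simp only: prod.lessThan_Suc_shift w u v nth_Cons_0 nth_Cons_Suc)
  finally show ?case .
qed

lemma kr_wperm:
  assumes "\<sigma> permutes {..<n}" "length w = n" "length u = n" "length v = n"
  shows "kr (wperm n \<sigma> w) (wperm n \<sigma> u) (wperm n \<sigma> v) = kr w u v"
proof -
  have "kr (wperm n \<sigma> w) (wperm n \<sigma> u) (wperm n \<sigma> v) = (\<Prod>i<n. Mq (w!\<sigma> i) (u!\<sigma> i) (v!\<sigma> i))"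
    by (simp add: kr_prod)
  also have "\<dots> = (\<Prod>i<n. Mq (w!i) (u!i) (v!i))"
    using prod.permute[OF assms(1), of "\<lambda>i. Mq (w!i) (u!i) (v!i)"] by (simp add: o_def)
  finally show ?thesis using assms by (simp add: kr_prod)
qed

lemma phi_wperm:
  assumes "\<sigma> permutes {..<n}" "length u = n" "length v = n"
  shows "(\<Sum>w\<in>words n. x (wperm n \<sigma> w) * kr w u v) = phi n x (wperm n \<sigma> u) (wperm n \<sigma> v)"
proof -
  have "phi n x (wperm n \<sigma> u) (wperm n \<sigma> v)
      = (\<Sum>w\<in>words n. x (wperm n \<sigma> w) * kr (wperm n \<sigma> w) (wperm n \<sigma> u) (wperm n \<sigma> v))"
    unfolding phi_def by (rule sum.reindex_bij_betw[symmetric, OF wperm_bij[OF assms(1)]])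
  also have "\<dots> = (\<Sum>w\<in>words n. x (wperm n \<sigma> w) * kr w u v)"
    by (intro sum.cong refl) (simp add: kr_wperm assms words_def)
  finally show ?thesis by simp
qed

lemma phi_tsym:
  assumes "length u = n" "length v = n"
  shows "phi n (tsym n x) u v = (1 / of_nat (fact n)) * (\<Sum>\<sigma>\<in>{\<sigma>. \<sigma> permutes {..<n}}. phi n x (wperm n \<sigma> u) (wperm n \<sigma> v))"
proof -
  have "phi n (tsym n x) u v = (\<Sum>w\<in>words n. \<Sum>\<sigma>\<in>{\<sigma>. \<sigma> permutes {..<n}}. (1 / of_nat (fact n)) * (x (wperm n \<sigma> w) * kr w u v))"
    unfolding phi_def tsym_def by (intro sum.cong refl) (simp add: sum_distrib_left sum_distrib_right algebra_simps)
  also have "\<dots> = (\<Sum>\<sigma>\<in>{\<sigma>. \<sigma> permutes {..<n}}. \<Sum>w\<in>words n. (1 / of_nat (fact n)) * (x (wperm n \<sigma> w) * kr w u v))"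
    by (rule sum.swap)
  also have "\<dots> = (\<Sum>\<sigma>\<in>{\<sigma>. \<sigma> permutes {..<n}}. (1 / of_nat (fact n)) * phi n x (wperm n \<sigma> u) (wperm n \<sigma> v))"
  proof (intro sum.cong refl)
    fix \<sigma> assume "\<sigma> \<in> {\<sigma>. \<sigma> permutes {..<n}}"
    then show "(\<Sum>w\<in>words n. (1 / of_nat (fact n)) * (x (wperm n \<sigma> w) * kr w u v))
       = (1 / of_nat (fact n)) * phi n x (wperm n \<sigma> u) (wperm n \<sigma> v)"
      using phi_wperm[of \<sigma> n u v x] assms by (simp only: sum_distrib_left[symmetric] mem_Collect_eq)
  qed
  also have "\<dots> = (1 / of_nat (fact n)) * (\<Sum>\<sigma>\<in>{\<sigma>. \<sigma> permutes {..<n}}. phi n x (wperm n \<sigma> u) (wperm n \<sigma> v))"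
    by (simp add: sum_distrib_left)
  finally show ?thesis .
qed

definition swp :: "nat \<Rightarrow> nat \<Rightarrow> nat list \<Rightarrow> nat list" where
  "swp i j u = u[i := u!j, j := u!i]"

lemma swp_length[simp]: "length (swp i j u) = length u"
  by (simp add: swp_def)

lemma swp_nth: "i < length u \<Longrightarrow> j < length u \<Longrightarrow> k < length u \<Longrightarrow>
  swp i j u ! k = (if k = j then u!i else if k = i then u!j else u!k)"
  by (simp add: swp_def nth_list_update)

lemma swp_bwords: "u \<in> bwords n \<Longrightarrow> i < n \<Longrightarrow> j < n \<Longrightarrow> swp i j u \<in> bwords n"
proof -
  assume u: "u \<in> bwords n" and ij: "i < n" "j < n"
  then have l: "length u = n" and s: "set u \<subseteq> {0,1}" by (auto simp: bwords_def)
  have "u ! i \<in> {0,1}" "u ! j \<in> {0,1}" using s l ij nth_mem by blast+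
  then have "set (u[i := u!j, j := u!i]) \<subseteq> {0,1}"
    by (intro set_update_subsetI s)
  then show ?thesis using l by (simp add: bwords_def swp_def)
qed

lemma swp_comm: "i < length u \<Longrightarrow> j < length u \<Longrightarrow> swp i j u = swp j i u"
  by (rule nth_equalityI) (auto simp: swp_nth)

lemma swp_swp: "i < length u \<Longrightarrow> j < length u \<Longrightarrow> swp i j (swp i j u) = u"
  by (rule nth_equalityI) (auto simp: swp_nth)

lemma wperm_swp:
  assumes "\<sigma> permutes {..<n}" "length u = n" "a < n" "b < n"
  shows "wperm n \<sigma> (swp (\<sigma> a) (\<sigma> b) u) = swp a b (wperm n \<sigma> u)"
proof (rule nth_equalityI)
  show "length (wperm n \<sigma> (swp (\<sigma> a) (\<sigma> b) u)) = length (swp a b (wperm n \<sigma> u))" by simp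
  fix i assume "i < length (wperm n \<sigma> (swp (\<sigma> a) (\<sigma> b) u))"
  then have i: "i < n" by simp
  have s: "\<And>k. k < n \<Longrightarrow> \<sigma> k < n" using permutes_in_image[OF assms(1)] by simp
  have inj: "\<And>k l. \<sigma> k = \<sigma> l \<longleftrightarrow> k = l" using permutes_inj[OF assms(1)] by (meson injD)
  have *: "\<sigma> i < n" "\<sigma> a < n" "\<sigma> b < n" using s i assms by auto
  have "wperm n \<sigma> (swp (\<sigma> a) (\<sigma> b) u) ! i = swp (\<sigma> a) (\<sigma> b) u ! \<sigma> i" using i by simp
  also have "\<dots> = (if \<sigma> i = \<sigma> b then u ! \<sigma> a else if \<sigma> i = \<sigma> a then u ! \<sigma> b else u ! \<sigma> i)"
    using * assms(2) by (simp add: swp_nth)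
  also have "\<dots> = (if i = b then u ! \<sigma> a else if i = a then u ! \<sigma> b else u ! \<sigma> i)"
    by (simp only: inj)
  also have "\<dots> = swp a b (wperm n \<sigma> u) ! i" using i assms(3,4) by (simp add: swp_nth)
  finally show "wperm n \<sigma> (swp (\<sigma> a) (\<sigma> b) u) ! i = swp a b (wperm n \<sigma> u) ! i" .
qed

lemma wperm_transpose:
  assumes "length u = n" "i < n" "j < n"
  shows "wperm n (Transposition.transpose i j) u = swp i j u"
proof (rule nth_equalityI)
  show "length (wperm n (Transposition.transpose i j) u) = length (swp i j u)" using assms by simp
  fix k assume "k < length (wperm n (Transposition.transpose i j) u)"
  then have k: "k < n" by simp
  have "wperm n (Transposition.transpose i j) u ! k = u ! (Transposition.transpose i j k)" using k by simp
  also have "\<dots> = swp i j u ! k"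
    using k assms by (cases "k = i"; cases "k = j") (simp_all add: swp_nth)
  finally show "wperm n (Transposition.transpose i j) u ! k = swp i j u ! k" .
qed


section \<open>The element Delta in the matrix model\<close>

lemma Mq_delta:
  assumes "a0 \<le> 1" "a1 \<le> 1" "b0 \<le> 1" "b1 \<le> 1"
  shows "(\<Sum>i<4. Mq i a0 b0 * Mq i a1 b1) =
    2 * (if a0 = b0 \<and> a1 = b1 then 1 else 0) - 2 * (if a0 = b1 \<and> a1 = b0 then 1 else 0)"
proof -
  have "(\<Sum>i<4. Mq i a0 b0 * Mq i a1 b1) = Mq 0 a0 b0 * Mq 0 a1 b1 + Mq 1 a0 b0 * Mq 1 a1 b1
     + Mq 2 a0 b0 * Mq 2 a1 b1 + Mq 3 a0 b0 * Mq 3 a1 b1"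
    by (simp add: numeral_eq_Suc)
  also have "\<dots> = 2 * (if a0 = b0 \<and> a1 = b1 then 1 else 0) - 2 * (if a0 = b1 \<and> a1 = b0 then 1 else 0)"
    using le1_cases[OF assms(1)] le1_cases[OF assms(2)] le1_cases[OF assms(3)] le1_cases[OF assms(4)]
    by (elim disjE; simp add: Mq_def)
  finally show ?thesis .
qed

lemma sum_if_mem:
  assumes "finite S" "A \<subseteq> S"
  shows "(\<Sum>w\<in>S. if w \<in> A then g w else 0) = sum g A"
proof -
  have "(\<Sum>w\<in>S. if w \<in> A then g w else 0) = sum g (S \<inter> A)"
    using sum.inter_restrict[OF assms(1), of g A] by simp
  also have "S \<inter> A = A" using assms(2) by auto
  finally show ?thesis .
qed

lemma bwords2:
  assumes n: "2 \<le> n" and u: "u \<in> bwords n"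
  shows "\<exists>a0 a1 u'. u = a0#a1#u' \<and> a0 \<le> 1 \<and> a1 \<le> 1 \<and> u' \<in> bwords (n-2)"
proof -
  have l: "length u = n" and s: "set u \<subseteq> {0,1}" using u by (auto simp: bwords_def)
  obtain a0 r where r: "u = a0 # r" using l n by (cases u) auto
  obtain a1 u' where r2: "r = a1 # u'" using l n r by (cases r) auto
  show ?thesis using l s r r2 by (auto simp: bwords_def)
qed

lemma if3_arith: "1/4 * (2 * (if P then 1 else 0) - 2 * (if Q then 1 else 0)) * (if R then 1 else 0)
  = (if P \<and> R then 1/2 else 0) - (if Q \<and> R then 1/2 else (0::complex))"
  by (cases P; cases Q; cases R) simp_all

lemma phi_delta0:
  assumes n: "2 \<le> n" and u: "u \<in> bwords n" and v: "v \<in> bwords n"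
  shows "phi n (deltaH0 n) u v = (if u = v then 1/2 else 0) - (if v = swp 0 1 u then 1/2 else 0)"
proof -
  define f where "f i = [i,i] @ replicate (n-2) (0::nat)" for i :: nat
  have fw: "f ` {..<4} \<subseteq> words n" using n
    by (auto simp: f_def words_def set_replicate_conv_if split: if_splits)
  have finj: "inj_on f {..<4}" by (auto simp: f_def inj_on_def)
  have d: "deltaH0 n w = (if w \<in> f ` {..<4} then 1/4 else 0)" for w
    by (auto simp: deltaH0_def f_def)
  have "phi n (deltaH0 n) u v = (\<Sum>w\<in>words n. if w \<in> f ` {..<4} then 1/4 * kr w u v else 0)"
    unfolding phi_def d by (intro sum.cong refl) simp
  also have "\<dots> = (\<Sum>w\<in>f ` {..<4}. 1/4 * kr w u v)"
    by (rule sum_if_mem[OF finite_words fw])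
  also have "\<dots> = (\<Sum>i<4. 1/4 * kr (f i) u v)"
    by (simp add: sum.reindex[OF finj])
  finally have 1: "phi n (deltaH0 n) u v = (\<Sum>i<4. 1/4 * kr (f i) u v)" .
  obtain a0 a1 u' where uu: "u = a0#a1#u'" "a0 \<le> 1" "a1 \<le> 1" "u' \<in> bwords (n-2)"
    using bwords2[OF n u] by blast
  obtain b0 b1 v' where vv: "v = b0#b1#v'" "b0 \<le> 1" "b1 \<le> 1" "v' \<in> bwords (n-2)"
    using bwords2[OF n v] by blast
  have lu: "length u' = n - 2" and lv: "length v' = n - 2" using uu vv by (auto simp: bwords_def)
  have "kr (f i) u v = Mq i a0 b0 * Mq i a1 b1 * (if u' = v' then 1 else 0)" for i
    by (simp add: f_def uu vv kr_zero lu lv)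
  then have "phi n (deltaH0 n) u v = 1/4 * (\<Sum>i<4. Mq i a0 b0 * Mq i a1 b1) * (if u' = v' then 1 else 0)"
    unfolding 1 by (simp add: sum_distrib_left sum_distrib_right algebra_simps)
  also have "\<dots> = (if u = v then 1/2 else 0) - (if v = swp 0 1 u then 1/2 else 0)"
  proof -
    have e1: "(u = v) = ((a0 = b0 \<and> a1 = b1) \<and> u' = v')" by (auto simp: uu vv)
    have sw: "swp 0 1 u = a1 # a0 # u'" by (simp add: uu swp_def)
    have e2: "(v = swp 0 1 u) = ((a0 = b1 \<and> a1 = b0) \<and> u' = v')" unfolding sw by (auto simp: vv)
    show ?thesis unfolding Mq_delta[OF uu(2,3) vv(2,3)] e1 e2 by (rule if3_arith)
  qed
  finally show ?thesis .
qed

lemma perm_pair_exists: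
  assumes "2 \<le> (n::nat)" "a < n" "b < n" "a \<noteq> b"
  shows "\<exists>\<tau>. \<tau> permutes {..<n} \<and> \<tau> 0 = a \<and> \<tau> 1 = b"
proof (cases "b = 0")
  case True
  let ?\<tau> = "Transposition.transpose 1 a \<circ> Transposition.transpose 0 1"
  have "?\<tau> permutes {..<n}" using assms by (intro permutes_compose permutes_swap_id) auto
  moreover have "?\<tau> 0 = a" "?\<tau> 1 = b" using assms True by (auto simp: transpose_def)
  ultimately show ?thesis by blast
next
  case False
  let ?\<tau> = "Transposition.transpose a 0 \<circ> Transposition.transpose b 1"
  have "?\<tau> permutes {..<n}" using assms by (intro permutes_compose permutes_swap_id) auto
  moreover have "?\<tau> 0 = a" "?\<tau> 1 = b" using assms False by (auto simp: transpose_def)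
  ultimately show ?thesis by blast
qed

lemma sum_perm_pair:
  assumes "2 \<le> (n::nat)" "a < n" "b < n" "a \<noteq> b"
  shows "(\<Sum>\<sigma>\<in>{\<sigma>. \<sigma> permutes {..<n}}. g (\<sigma> a) (\<sigma> b)) = (\<Sum>\<sigma>\<in>{\<sigma>. \<sigma> permutes {..<n}}. g (\<sigma> 0) (\<sigma> 1))"
proof -
  obtain \<tau> where t: "\<tau> permutes {..<n}" "\<tau> 0 = a" "\<tau> 1 = b" using perm_pair_exists[OF assms] by blast
  show ?thesis using sum_permutations_compose_right[OF t(1), of "\<lambda>\<sigma>. g (\<sigma> 0) (\<sigma> 1)"] t by simp
qed

lemma sum_offdiag_const:
  assumes "a < n"
  shows "(\<Sum>b<n. if a = b then 0 else (c::complex)) = of_nat (n - 1) * c"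
proof -
  have "(\<Sum>b<n. if a = b then 0 else c) = (if a = a then 0 else c) + (\<Sum>b\<in>{..<n}-{a}. if a = b then 0 else c)"
    using assms by (subst sum.remove[of _ a]) auto
  also have "\<dots> = (\<Sum>b\<in>{..<n}-{a}. c)" by (auto intro!: sum.cong)
  also have "\<dots> = of_nat (n - 1) * c" using assms by simp
  finally show ?thesis .
qed

lemma sum_offdiag_permute:
  assumes "\<sigma> permutes {..<n}"
  shows "(\<Sum>a<n. \<Sum>b<n. if a = b then 0 else g (\<sigma> a) (\<sigma> b)) = (\<Sum>i<n. \<Sum>j<n. if i = j then 0 else (g i j::complex))"
proof -
  have inj: "\<And>k l. \<sigma> k = \<sigma> l \<longleftrightarrow> k = l" using permutes_inj[OF assms] by (meson injD)
  have "(\<Sum>b<n. if a = b then 0 else g (\<sigma> a) (\<sigma> b)) = (\<Sum>j<n. if \<sigma> a = j then 0 else g (\<sigma> a) j)" for a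
  proof -
    have "(\<Sum>b<n. if a = b then 0 else g (\<sigma> a) (\<sigma> b)) = (\<Sum>b<n. ((\<lambda>j. if \<sigma> a = j then 0 else g (\<sigma> a) j) \<circ> \<sigma>) b)"
      by (intro sum.cong) (auto simp: inj)
    also have "\<dots> = (\<Sum>j<n. if \<sigma> a = j then 0 else g (\<sigma> a) j)" by (rule sum.permute[OF assms, symmetric])
    finally show ?thesis .
  qed
  then have "(\<Sum>a<n. \<Sum>b<n. if a = b then 0 else g (\<sigma> a) (\<sigma> b)) = (\<Sum>a<n. ((\<lambda>i. \<Sum>j<n. if i = j then 0 else g i j) \<circ> \<sigma>) a)"
    by simp
  also have "\<dots> = (\<Sum>i<n. \<Sum>j<n. if i = j then 0 else g i j)" by (rule sum.permute[OF assms, symmetric])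
  finally show ?thesis .
qed

lemma count_pairs:
  assumes n: "2 \<le> n"
  shows "of_nat (n*(n-1)) * (\<Sum>\<sigma>\<in>{\<sigma>. \<sigma> permutes {..<n}}. g (\<sigma> 0) (\<sigma> 1)) =
     of_nat (fact n) * (\<Sum>i<n. \<Sum>j<n. if i = j then 0 else (g i j::complex))"
proof -
  let ?P = "{\<sigma>. \<sigma> permutes {..<n}}"
  let ?S0 = "\<Sum>\<sigma>\<in>?P. g (\<sigma> 0) (\<sigma> 1)"
  let ?X = "\<Sum>a<n. \<Sum>b<n. if a = b then 0 else \<Sum>\<sigma>\<in>?P. g (\<sigma> a) (\<sigma> b)"
  have "?X = (\<Sum>a<n. \<Sum>b<n. if a = b then 0 else ?S0)"
    using sum_perm_pair[OF n] by (intro sum.cong refl) auto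
  also have "\<dots> = (\<Sum>a<n. of_nat (n - 1) * ?S0)"
    by (intro sum.cong refl) (simp add: sum_offdiag_const)
  also have "\<dots> = of_nat (n*(n-1)) * ?S0" using n by (simp add: of_nat_diff)
  finally have A: "?X = of_nat (n*(n-1)) * ?S0" .
  have "?X = (\<Sum>a<n. \<Sum>b<n. \<Sum>\<sigma>\<in>?P. if a = b then 0 else g (\<sigma> a) (\<sigma> b))"
    by (intro sum.cong refl) simp
  also have "\<dots> = (\<Sum>\<sigma>\<in>?P. \<Sum>a<n. \<Sum>b<n. if a = b then 0 else g (\<sigma> a) (\<sigma> b))"
    by (rule trans[OF sum.cong[OF refl sum.swap] sum.swap])
  also have "\<dots> = (\<Sum>\<sigma>\<in>?P. \<Sum>i<n. \<Sum>j<n. if i = j then 0 else g i j)"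
    by (rule sum.cong[OF refl]) (simp add: sum_offdiag_permute)
  also have "\<dots> = of_nat (fact n) * (\<Sum>i<n. \<Sum>j<n. if i = j then 0 else g i j)"
    by (simp add: card_permutations)
  finally have B: "?X = of_nat (fact n) * (\<Sum>i<n. \<Sum>j<n. if i = j then 0 else g i j)" .
  show ?thesis using trans[OF sym[OF A] B] .
qed


lemma phi_Delta:
  assumes n: "2 \<le> n" and u: "u \<in> bwords n" and v: "v \<in> bwords n"
  shows "phi n (deltaH n) u v = (if u = v then 1/2 else 0)
     - (1 / (2 * of_nat (n*(n-1)))) * (\<Sum>i<n. \<Sum>j<n. if i = j then 0 else (if v = swp i j u then 1 else 0))"
proof -
  let ?P = "{\<sigma>. \<sigma> permutes {..<n}}"
  define g where "g i j = (if v = swp i j u then 1 else (0::complex))" for i j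
  define c where "c = (if u = v then 1/2 else (0::complex))"
  have lu: "length u = n" and lv: "length v = n" using u v by (auto simp: bwords_def)
  have step: "phi n (deltaH0 n) (wperm n \<sigma> u) (wperm n \<sigma> v) = c - 1/2 * g (\<sigma> 0) (\<sigma> 1)" if "\<sigma> \<in> ?P" for \<sigma>
  proof -
    from that have \<sigma>: "\<sigma> permutes {..<n}" by simp
    have e1: "(wperm n \<sigma> u = wperm n \<sigma> v) = (u = v)" by (rule wperm_inj[OF \<sigma> lu lv])
    have "swp 0 1 (wperm n \<sigma> u) = wperm n \<sigma> (swp (\<sigma> 0) (\<sigma> 1) u)" using wperm_swp[OF \<sigma> lu, of 0 1] n by simp
    then have e2: "(wperm n \<sigma> v = swp 0 1 (wperm n \<sigma> u)) = (v = swp (\<sigma> 0) (\<sigma> 1) u)"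
      using wperm_inj[OF \<sigma> lv, of "swp (\<sigma> 0) (\<sigma> 1) u"] lu by simp
    have "phi n (deltaH0 n) (wperm n \<sigma> u) (wperm n \<sigma> v) = c - (if v = swp (\<sigma> 0) (\<sigma> 1) u then 1/2 else 0)"
      unfolding phi_delta0[OF n wperm_bwords[OF \<sigma> u] wperm_bwords[OF \<sigma> v]] e1 e2 c_def ..
    also have "\<dots> = c - 1/2 * g (\<sigma> 0) (\<sigma> 1)"
      unfolding g_def by (cases "v = swp (\<sigma> 0) (\<sigma> 1) u") simp_all
    finally show ?thesis .
  qed
  have fn: "of_nat (fact n) \<noteq> (0::complex)" by simp
  have nn: "of_nat (n*(n-1)) \<noteq> (0::complex)" using n by simp
  have cnt: "of_nat (n*(n-1)) * (\<Sum>\<sigma>\<in>?P. g (\<sigma> 0) (\<sigma> 1)) = of_nat (fact n) * (\<Sum>i<n. \<Sum>j<n. if i = j then 0 else g i j)"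
    by (rule count_pairs[OF n])
  have "phi n (deltaH n) u v = 1 / of_nat (fact n) * (\<Sum>\<sigma>\<in>?P. phi n (deltaH0 n) (wperm n \<sigma> u) (wperm n \<sigma> v))"
    unfolding deltaH_def by (rule phi_tsym[OF lu lv])
  also have "\<dots> = 1 / of_nat (fact n) * (\<Sum>\<sigma>\<in>?P. c - 1/2 * g (\<sigma> 0) (\<sigma> 1))"
    using step by simp
  also have "\<dots> = 1 / of_nat (fact n) * (of_nat (fact n) * c - 1/2 * (\<Sum>\<sigma>\<in>?P. g (\<sigma> 0) (\<sigma> 1)))"
    by (simp add: sum_subtractf card_permutations sum_divide_distrib)
  also have "\<dots> = c - 1 / (2 * of_nat (n*(n-1))) * (of_nat (n*(n-1)) * (\<Sum>\<sigma>\<in>?P. g (\<sigma> 0) (\<sigma> 1))) / of_nat (fact n)"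
    using fn nn by (simp add: field_simps)
  also have "\<dots> = c - 1 / (2 * of_nat (n*(n-1))) * (\<Sum>i<n. \<Sum>j<n. if i = j then 0 else g i j)"
    unfolding cnt using fn by simp
  finally show ?thesis unfolding c_def g_def .
qed

definition Kop :: "nat \<Rightarrow> (nat list \<Rightarrow> complex) \<Rightarrow> nat list \<Rightarrow> complex" where
  "Kop n z = (\<lambda>u. if u \<in> bwords n then z u / 2
     - (1 / (2 * of_nat (n*(n-1)))) * (\<Sum>i<n. \<Sum>j<n. if i = j then 0 else z (swp i j u)) else 0)"

lemma sum_swp_delta:
  assumes "s \<in> bwords n"
  shows "(\<Sum>v\<in>bwords n. (if i = j then 0 else (if v = s then 1 else 0)) * z v) = (if i = j then 0 else (z s::complex))"
proof (cases "i = j")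
  case False
  then show ?thesis using sum_delta_mult1[of "bwords n" s z] assms by simp
qed simp

lemma op_Delta:
  assumes n: "2 \<le> n"
  shows "op n (deltaH n) z = Kop n z"
proof (rule ext)
  fix u
  show "op n (deltaH n) z u = Kop n z u"
  proof (cases "u \<in> bwords n")
    case True
    define c where "c = (1 / (2 * of_nat (n*(n-1))) :: complex)"
    define T where "T v = (\<Sum>i<n. \<Sum>j<n. if i = j then 0 else (if v = swp i j u then 1 else (0::complex)))" for v
    have "op n (deltaH n) z u = (\<Sum>v\<in>bwords n. ((if u = v then 1/2 else 0) - c * T v) * z v)"
      unfolding op_def c_def T_def using True by (simp add: phi_Delta[OF n True])
    also have "\<dots> = (\<Sum>v\<in>bwords n. (if u = v then 1/2 else 0) * z v) - c * (\<Sum>v\<in>bwords n. T v * z v)"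
      by (simp add: sum_subtractf sum_distrib_left left_diff_distrib mult.assoc)
    also have "(\<Sum>v\<in>bwords n. (if u = v then 1/2 else 0) * z v) = z u / 2"
    proof -
      have "(\<Sum>v\<in>bwords n. (if u = v then 1/2 else 0) * z v) = (\<Sum>v\<in>bwords n. (if u = v then 1 else 0) * (z v / 2))"
        by (intro sum.cong) auto
      also have "\<dots> = z u / 2" using sum_delta_mult3[OF finite_bwords, of u "\<lambda>v. z v / 2" n] True by simp
      finally show ?thesis .
    qed
    also have "(\<Sum>v\<in>bwords n. T v * z v) = (\<Sum>i<n. \<Sum>j<n. if i = j then 0 else z (swp i j u))"
    proof -
      have "(\<Sum>v\<in>bwords n. T v * z v) = (\<Sum>v\<in>bwords n. \<Sum>i<n. \<Sum>j<n. (if i = j then 0 else (if v = swp i j u then 1 else 0)) * z v)"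
        unfolding T_def by (simp add: sum_distrib_right)
      also have "\<dots> = (\<Sum>i<n. \<Sum>j<n. \<Sum>v\<in>bwords n. (if i = j then 0 else (if v = swp i j u then 1 else 0)) * z v)"
        by (rule trans[OF sum.swap sum.cong[OF refl sum.swap]])
      also have "\<dots> = (\<Sum>i<n. \<Sum>j<n. if i = j then 0 else z (swp i j u))"
        by (intro sum.cong refl sum_swp_delta swp_bwords[OF True]) auto
      finally show ?thesis .
    qed
    finally show ?thesis using True by (simp add: Kop_def c_def)
  qed (simp add: op_def Kop_def)
qed


section \<open>Raising and lowering operators on binary words\<close>

definition wt :: "nat list \<Rightarrow> nat" where
  "wt u = card {i. i < length u \<and> u!i = 1}"

definition Ones :: "nat \<Rightarrow> nat list \<Rightarrow> nat set" where
  "Ones n u = {i. i < n \<and> u!i = 1}"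

definition Zeros :: "nat \<Rightarrow> nat list \<Rightarrow> nat set" where
  "Zeros n u = {i. i < n \<and> u!i = 0}"

definition Dop :: "nat \<Rightarrow> (nat list \<Rightarrow> complex) \<Rightarrow> nat list \<Rightarrow> complex" where
  "Dop n z = (\<lambda>u. if u \<in> bwords n then (\<Sum>j\<in>Zeros n u. z (u[j:=1])) else 0)"

definition Uop :: "nat \<Rightarrow> (nat list \<Rightarrow> complex) \<Rightarrow> nat list \<Rightarrow> complex" where
  "Uop n z = (\<lambda>u. if u \<in> bwords n then (\<Sum>i\<in>Ones n u. z (u[i:=0])) else 0)"

lemma finite_Ones[simp]: "finite (Ones n u)" by (simp add: Ones_def)
lemma finite_Zeros[simp]: "finite (Zeros n u)" by (simp add: Zeros_def)

lemma bwords_nth: "u \<in> bwords n \<Longrightarrow> i < n \<Longrightarrow> u!i = 0 \<or> u!i = 1"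
  by (auto simp: bwords_def dest!: nth_mem)

lemma bwords_len: "u \<in> bwords n \<Longrightarrow> length u = n"
  by (simp add: bwords_def)

lemma Ones_Zeros_disj: "Ones n u \<inter> Zeros n u = {}"
  by (auto simp: Ones_def Zeros_def)

lemma Ones_Zeros_union:
  assumes u: "u \<in> bwords n" shows "Ones n u \<union> Zeros n u = {..<n}"
proof
  show "Ones n u \<union> Zeros n u \<subseteq> {..<n}" by (auto simp: Ones_def Zeros_def)
  show "{..<n} \<subseteq> Ones n u \<union> Zeros n u"
  proof
    fix x assume x: "x \<in> {..<n}"
    then have "u!x = 0 \<or> u!x = 1" using bwords_nth[OF u] by simp
    then show "x \<in> Ones n u \<union> Zeros n u" using x by (auto simp: Ones_def Zeros_def)
  qed
qed

lemma wt_Ones: "u \<in> bwords n \<Longrightarrow> wt u = card (Ones n u)"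
  by (simp add: wt_def Ones_def bwords_len)

lemma card_Zeros: "u \<in> bwords n \<Longrightarrow> card (Zeros n u) = n - wt u"
proof -
  assume u: "u \<in> bwords n"
  have "card (Ones n u) + card (Zeros n u) = n"
    using card_Un_disjoint[OF finite_Ones finite_Zeros Ones_Zeros_disj, of n u] Ones_Zeros_union[OF u] by simp
  then show ?thesis using wt_Ones[OF u] by simp
qed

lemma wt_le: "u \<in> bwords n \<Longrightarrow> wt u \<le> n"
  using card_Zeros[of u n] wt_Ones[of u n] card_mono[of "{..<n}" "Ones n u"]
  by (auto simp: Ones_def)

lemma upd_bwords: "u \<in> bwords n \<Longrightarrow> (b::nat) \<le> 1 \<Longrightarrow> u[j:=b] \<in> bwords n"
proof -
  assume u: "u \<in> bwords n" and b: "b \<le> 1"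
  have "set (u[j:=b]) \<subseteq> {0,1}" using u b by (intro set_update_subsetI) (auto simp: bwords_def)
  then show ?thesis using u by (simp add: bwords_def)
qed

lemma Ones_upd1: "u \<in> bwords n \<Longrightarrow> j \<in> Zeros n u \<Longrightarrow> Ones n (u[j:=1]) = insert j (Ones n u)"
  by (auto simp: Ones_def Zeros_def nth_list_update bwords_len)

lemma Zeros_upd1: "u \<in> bwords n \<Longrightarrow> j \<in> Zeros n u \<Longrightarrow> Zeros n (u[j:=1]) = Zeros n u - {j}"
  by (auto simp: Zeros_def nth_list_update bwords_len)

lemma Zeros_upd0: "u \<in> bwords n \<Longrightarrow> i \<in> Ones n u \<Longrightarrow> Zeros n (u[i:=0]) = insert i (Zeros n u)"
  by (auto simp: Ones_def Zeros_def nth_list_update bwords_len)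

lemma Ones_upd0: "u \<in> bwords n \<Longrightarrow> i \<in> Ones n u \<Longrightarrow> Ones n (u[i:=0]) = Ones n u - {i}"
  by (auto simp: Ones_def nth_list_update bwords_len)

lemma wt_upd1: "u \<in> bwords n \<Longrightarrow> j \<in> Zeros n u \<Longrightarrow> wt (u[j:=1]) = wt u + 1"
proof -
  assume u: "u \<in> bwords n" and j: "j \<in> Zeros n u"
  have "j \<notin> Ones n u" using j Ones_Zeros_disj by blast
  then show ?thesis using wt_Ones[OF u] wt_Ones[OF upd_bwords[OF u, of 1 j]] Ones_upd1[OF u j] by simp
qed

lemma wt_upd0: "u \<in> bwords n \<Longrightarrow> i \<in> Ones n u \<Longrightarrow> wt (u[i:=0]) + 1 = wt u"
proof -
  assume u: "u \<in> bwords n" and i: "i \<in> Ones n u"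
  have "card (Ones n u - {i}) + 1 = card (Ones n u)"
    using i card_Diff1_less[OF finite_Ones i] by (simp add: card_Diff_singleton)
  then show ?thesis using wt_Ones[OF u] wt_Ones[OF upd_bwords[OF u, of 0 i]] Ones_upd0[OF u i] by simp
qed

lemma swp_OZ: "u \<in> bwords n \<Longrightarrow> i \<in> Ones n u \<Longrightarrow> j \<in> Zeros n u \<Longrightarrow> (u[i:=0])[j:=1] = swp i j u"
  by (auto simp: swp_def Ones_def Zeros_def)

lemma swp_OZ': "u \<in> bwords n \<Longrightarrow> i \<in> Ones n u \<Longrightarrow> j \<in> Zeros n u \<Longrightarrow> (u[j:=1])[i:=0] = swp i j u"
proof -
  assume a: "u \<in> bwords n" "i \<in> Ones n u" "j \<in> Zeros n u"
  then have "i \<noteq> j" using Ones_Zeros_disj by blast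
  then have "(u[j:=1])[i:=0] = (u[i:=0])[j:=1]" by (rule list_update_swap[symmetric])
  then show ?thesis using swp_OZ[OF a] by simp
qed

lemma swp_same: "i < length u \<Longrightarrow> j < length u \<Longrightarrow> u!i = u!j \<Longrightarrow> swp i j u = u"
  by (rule nth_equalityI) (auto simp: swp_nth)

lemma UD_expand:
  assumes u: "u \<in> bwords n"
  shows "Uop n (Dop n z) u = of_nat (wt u) * z u + (\<Sum>i\<in>Ones n u. \<Sum>j\<in>Zeros n u. z (swp i j u))"
proof -
  have "Uop n (Dop n z) u = (\<Sum>i\<in>Ones n u. Dop n z (u[i:=0]))" using u by (simp add: Uop_def)
  also have "\<dots> = (\<Sum>i\<in>Ones n u. z u + (\<Sum>j\<in>Zeros n u. z (swp i j u)))"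
  proof (rule sum.cong[OF refl])
    fix i assume i: "i \<in> Ones n u"
    have ub: "u[i:=0] \<in> bwords n" by (rule upd_bwords[OF u]) simp
    have ni: "i \<notin> Zeros n u" using i Ones_Zeros_disj by blast
    have ui: "(u[i:=0])[i:=1] = u" using i u list_update_id[of u i] by (auto simp: Ones_def bwords_len)
    have "Dop n z (u[i:=0]) = (\<Sum>j\<in>insert i (Zeros n u). z ((u[i:=0])[j:=1]))"
      using ub Zeros_upd0[OF u i] by (simp add: Dop_def)
    also have "\<dots> = z u + (\<Sum>j\<in>Zeros n u. z ((u[i:=0])[j:=1]))"
      using ni ui by simp
    also have "(\<Sum>j\<in>Zeros n u. z ((u[i:=0])[j:=1])) = (\<Sum>j\<in>Zeros n u. z (swp i j u))"
      using swp_OZ[OF u i] by simp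
    finally show "Dop n z (u[i:=0]) = z u + (\<Sum>j\<in>Zeros n u. z (swp i j u))" .
  qed
  also have "\<dots> = of_nat (wt u) * z u + (\<Sum>i\<in>Ones n u. \<Sum>j\<in>Zeros n u. z (swp i j u))"
    by (simp add: sum.distrib wt_Ones[OF u])
  finally show ?thesis .
qed

lemma DU_expand:
  assumes u: "u \<in> bwords n"
  shows "Dop n (Uop n z) u = of_nat (n - wt u) * z u + (\<Sum>j\<in>Zeros n u. \<Sum>i\<in>Ones n u. z (swp i j u))"
proof -
  have "Dop n (Uop n z) u = (\<Sum>j\<in>Zeros n u. Uop n z (u[j:=1]))" using u by (simp add: Dop_def)
  also have "\<dots> = (\<Sum>j\<in>Zeros n u. z u + (\<Sum>i\<in>Ones n u. z (swp i j u)))"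
  proof (rule sum.cong[OF refl])
    fix j assume j: "j \<in> Zeros n u"
    have ub: "u[j:=1] \<in> bwords n" by (rule upd_bwords[OF u]) simp
    have nj: "j \<notin> Ones n u" using j Ones_Zeros_disj by blast
    have uj: "(u[j:=1])[j:=0] = u" using j u list_update_id[of u j] by (auto simp: Zeros_def bwords_len)
    have "Uop n z (u[j:=1]) = (\<Sum>i\<in>insert j (Ones n u). z ((u[j:=1])[i:=0]))"
      using ub Ones_upd1[OF u j] by (simp add: Uop_def)
    also have "\<dots> = z u + (\<Sum>i\<in>Ones n u. z ((u[j:=1])[i:=0]))"
      using nj uj by simp
    also have "(\<Sum>i\<in>Ones n u. z ((u[j:=1])[i:=0])) = (\<Sum>i\<in>Ones n u. z (swp i j u))"
      using swp_OZ'[OF u _ j] by simp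
    finally show "Uop n z (u[j:=1]) = z u + (\<Sum>i\<in>Ones n u. z (swp i j u))" .
  qed
  also have "\<dots> = of_nat (n - wt u) * z u + (\<Sum>j\<in>Zeros n u. \<Sum>i\<in>Ones n u. z (swp i j u))"
    by (simp add: sum.distrib card_Zeros[OF u])
  finally show ?thesis .
qed

lemma commutator:
  assumes u: "u \<in> bwords n"
  shows "Dop n (Uop n z) u = Uop n (Dop n z) u + (of_nat n - 2 * of_nat (wt u)) * z u"
proof -
  have sw: "(\<Sum>j\<in>Zeros n u. \<Sum>i\<in>Ones n u. z (swp i j u)) = (\<Sum>i\<in>Ones n u. \<Sum>j\<in>Zeros n u. z (swp i j u))"
    by (rule sum.swap)
  have e: "of_nat (n - wt u) = (of_nat n - of_nat (wt u) :: complex)"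
    using wt_le[OF u] by (simp add: of_nat_diff)
  show ?thesis unfolding UD_expand[OF u] DU_expand[OF u] sw e by (simp add: algebra_simps)
qed


lemma sum_offdiag_const2:
  assumes "finite A" "a \<in> A"
  shows "(\<Sum>b\<in>A. if a = b then 0 else (c::complex)) = of_nat (card A - 1) * c"
proof -
  have "(\<Sum>b\<in>A. if a = b then 0 else c) = (if a = a then 0 else c) + (\<Sum>b\<in>A-{a}. if a = b then 0 else c)"
    using assms by (subst sum.remove[of _ a]) auto
  also have "\<dots> = (\<Sum>b\<in>A-{a}. c)"
  proof -
    have "(\<Sum>b\<in>A-{a}. if a = b then 0 else c) = (\<Sum>b\<in>A-{a}. c)" by (rule sum.cong) auto
    then show ?thesis by simp
  qed
  also have "\<dots> = of_nat (card A - 1) * c" using assms by simp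
  finally show ?thesis .
qed

lemma sum_split_OZ:
  assumes u: "u \<in> bwords n"
  shows "(\<Sum>i<n. f i) = (\<Sum>i\<in>Ones n u. f i) + (\<Sum>i\<in>Zeros n u. (f i::complex))"
proof -
  have "(\<Sum>i<n. f i) = sum f (Ones n u \<union> Zeros n u)" by (simp add: Ones_Zeros_union[OF u])
  also have "\<dots> = sum f (Ones n u) + sum f (Zeros n u)"
    by (rule sum.union_disjoint) (auto simp: Ones_Zeros_disj)
  finally show ?thesis .
qed

lemma of_nat_kk1: "of_nat (k * (k - 1)) = (of_nat k * (of_nat k - 1) :: complex)"
  by (cases k) (simp_all add: algebra_simps)

lemma Kop_arith: assumes "Nn*(Nn-1) \<noteq> (0::complex)"
  shows "zu/2 - 1/(2*(Nn*(Nn-1))) * (K*(K-1)*zu + (Nn-K)*(Nn-K-1)*zu + 2*X) = (K*(Nn-K+1)*zu - (K*zu + X))/(Nn*(Nn-1))"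
  using assms by (simp add: field_simps)

lemma Kop_UD:
  assumes n: "2 \<le> n" and u: "u \<in> bwords n"
  shows "Kop n z u = (of_nat (wt u) * (of_nat n - of_nat (wt u) + 1) * z u - Uop n (Dop n z) u) / of_nat (n*(n-1))"
proof -
  let ?O = "Ones n u" and ?Z = "Zeros n u"
  define X where "X = (\<Sum>i\<in>?O. \<Sum>j\<in>?Z. z (swp i j u))"
  define k where "k = wt u"
  have lu: "length u = n" using u by (simp add: bwords_len)
  have cO: "card ?O = k" using wt_Ones[OF u] k_def by simp
  have cZ: "card ?Z = n - k" using card_Zeros[OF u] k_def by simp
  have kn: "k \<le> n" using wt_le[OF u] k_def by simp
  let ?G = "\<lambda>i j. if i = j then 0 else z (swp i j u)"
  have FO: "(\<Sum>j<n. ?G i j) = of_nat (card ?O - 1) * z u + (\<Sum>j\<in>?Z. z (swp i j u))" if i: "i \<in> ?O" for i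
  proof -
    have "(\<Sum>j\<in>?O. ?G i j) = (\<Sum>j\<in>?O. if i = j then 0 else z u)"
    proof (rule sum.cong[OF refl])
      fix j assume j: "j \<in> ?O"
      have "swp i j u = u" using i j lu by (intro swp_same) (auto simp: Ones_def)
      then show "?G i j = (if i = j then 0 else z u)" by simp
    qed
    also have "\<dots> = of_nat (card ?O - 1) * z u" by (rule sum_offdiag_const2[OF finite_Ones i])
    finally have 1: "(\<Sum>j\<in>?O. ?G i j) = of_nat (card ?O - 1) * z u" .
    have 2: "(\<Sum>j\<in>?Z. ?G i j) = (\<Sum>j\<in>?Z. z (swp i j u))"
      using i Ones_Zeros_disj by (intro sum.cong refl) auto
    show ?thesis using sum_split_OZ[OF u, of "?G i"] 1 2 by simp
  qed
  have FZ: "(\<Sum>j<n. ?G i j) = (\<Sum>j\<in>?O. z (swp j i u)) + of_nat (card ?Z - 1) * z u" if i: "i \<in> ?Z" for i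
  proof -
    have "(\<Sum>j\<in>?Z. ?G i j) = (\<Sum>j\<in>?Z. if i = j then 0 else z u)"
    proof (rule sum.cong[OF refl])
      fix j assume j: "j \<in> ?Z"
      have "swp i j u = u" using i j lu by (intro swp_same) (auto simp: Zeros_def)
      then show "?G i j = (if i = j then 0 else z u)" by simp
    qed
    also have "\<dots> = of_nat (card ?Z - 1) * z u" by (rule sum_offdiag_const2[OF finite_Zeros i])
    finally have 1: "(\<Sum>j\<in>?Z. ?G i j) = of_nat (card ?Z - 1) * z u" .
    have 2: "(\<Sum>j\<in>?O. ?G i j) = (\<Sum>j\<in>?O. z (swp j i u))"
    proof (rule sum.cong[OF refl])
      fix j assume j: "j \<in> ?O"
      then have "i \<noteq> j" "i < n" "j < n" using i Ones_Zeros_disj by (auto simp: Ones_def Zeros_def)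
      then show "?G i j = z (swp j i u)" using swp_comm[of i u j] lu by simp
    qed
    show ?thesis using sum_split_OZ[OF u, of "?G i"] 1 2 by simp
  qed
  have S: "(\<Sum>i<n. \<Sum>j<n. ?G i j) = of_nat (k * (k - 1)) * z u + of_nat ((n - k) * (n - k - 1)) * z u + 2 * X"
  proof -
    have "(\<Sum>i<n. \<Sum>j<n. ?G i j) = (\<Sum>i\<in>?O. \<Sum>j<n. ?G i j) + (\<Sum>i\<in>?Z. \<Sum>j<n. ?G i j)"
      by (rule sum_split_OZ[OF u])
    also have "(\<Sum>i\<in>?O. \<Sum>j<n. ?G i j) = (\<Sum>i\<in>?O. of_nat (card ?O - 1) * z u + (\<Sum>j\<in>?Z. z (swp i j u)))"
      using FO by simp
    also have "\<dots> = of_nat (k * (k - 1)) * z u + X"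
      by (simp add: sum.distrib X_def cO)
    also have "(\<Sum>i\<in>?Z. \<Sum>j<n. ?G i j) = (\<Sum>i\<in>?Z. (\<Sum>j\<in>?O. z (swp j i u)) + of_nat (card ?Z - 1) * z u)"
      using FZ by simp
    also have "\<dots> = X + of_nat ((n - k) * (n - k - 1)) * z u"
      by (simp add: sum.distrib X_def cZ sum.swap[of _ ?Z ?O])
    finally show ?thesis by simp
  qed
  have UD: "Uop n (Dop n z) u = of_nat k * z u + X" unfolding UD_expand[OF u] X_def k_def ..
  have N: "of_nat (n*(n-1)) \<noteq> (0::complex)" using n by simp
  have e1: "of_nat ((n - k) * (n - k - 1)) = ((of_nat n - of_nat k) * (of_nat n - of_nat k - 1) :: complex)"
    using of_nat_kk1[of "n - k"] kn by (simp add: of_nat_diff)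
  have e2: "of_nat (n*(n-1)) = (of_nat n * (of_nat n - 1) :: complex)" using of_nat_kk1[of n] by simp
  have nk: "of_nat (n - k) = (of_nat n - of_nat k :: complex)" using kn by (simp add: of_nat_diff)
  have "Kop n z u = z u / 2 - 1 / (2 * of_nat (n*(n-1))) * (of_nat (k * (k - 1)) * z u + of_nat ((n - k) * (n - k - 1)) * z u + 2 * X)"
    using u unfolding Kop_def S by simp
  also have "\<dots> = (of_nat k * (of_nat n - of_nat k + 1) * z u - (of_nat k * z u + X)) / of_nat (n*(n-1))"
    unfolding of_nat_kk1 nk by (rule Kop_arith) (use N e2 in simp)
  finally show ?thesis unfolding UD k_def .
qed


lemma wt_swp:
  assumes u: "u \<in> bwords n" and ij: "i < n" "j < n"
  shows "wt (swp i j u) = wt u"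
proof -
  have lu: "length u = n" using u by (simp add: bwords_len)
  have A: "wt (swp a b u) = wt u" if a: "a \<in> Ones n u" and b: "b \<in> Zeros n u" for a b
  proof -
    have "swp a b u = (u[a:=0])[b:=1]" using swp_OZ[OF u a b] by simp
    moreover have ub: "u[a:=0] \<in> bwords n" by (rule upd_bwords[OF u]) simp
    moreover have "b \<in> Zeros n (u[a:=0])" using Zeros_upd0[OF u a] b by simp
    ultimately have "wt (swp a b u) = wt (u[a:=0]) + 1" using wt_upd1 by simp
    then show ?thesis using wt_upd0[OF u a] by simp
  qed
  consider "u!i = u!j" | "u!i = 1" "u!j = 0" | "u!i = 0" "u!j = 1"
    using bwords_nth[OF u ij(1)] bwords_nth[OF u ij(2)] by auto
  then show ?thesis
  proof cases
    case 1 then show ?thesis using swp_same[of i u j] lu ij by simp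
  next
    case 2 then show ?thesis using A[of i j] ij by (simp add: Ones_def Zeros_def)
  next
    case 3 then show ?thesis using A[of j i] ij swp_comm[of i u j] lu by (simp add: Ones_def Zeros_def)
  qed
qed

definition cmp :: "nat list \<Rightarrow> nat list" where
  "cmp u = map (\<lambda>b. 1 - b) u"

definition Cm :: "nat \<Rightarrow> (nat list \<Rightarrow> complex) \<Rightarrow> nat list \<Rightarrow> complex" where
  "Cm n z = (\<lambda>u. if u \<in> bwords n then z (cmp u) else 0)"

lemma cmp_bwords: "u \<in> bwords n \<Longrightarrow> cmp u \<in> bwords n"
  by (auto simp: cmp_def bwords_def)

lemma cmp_cmp: "u \<in> bwords n \<Longrightarrow> cmp (cmp u) = u"
proof -
  assume u: "u \<in> bwords n"
  have "\<forall>b\<in>set u. 1 - (1 - b) = b" using u by (auto simp: bwords_def)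
  then show ?thesis by (simp add: cmp_def map_idI)
qed

lemma cmp_swp: "i < length u \<Longrightarrow> j < length u \<Longrightarrow> cmp (swp i j u) = swp i j (cmp u)"
  by (rule nth_equalityI) (auto simp: cmp_def swp_nth)

lemma Ones_cmp: "u \<in> bwords n \<Longrightarrow> Ones n (cmp u) = Zeros n u"
  using bwords_nth[of u n] by (auto simp: Ones_def Zeros_def cmp_def bwords_len)

lemma wt_cmp: "u \<in> bwords n \<Longrightarrow> wt (cmp u) = n - wt u"
  using wt_Ones[OF cmp_bwords] Ones_cmp card_Zeros by metis

lemma Kop_Cm: "Kop n (Cm n z) = Cm n (Kop n z)"
proof (rule ext)
  fix u
  show "Kop n (Cm n z) u = Cm n (Kop n z) u"
  proof (cases "u \<in> bwords n")
    case True
    have lu: "length u = n" using True by (simp add: bwords_len)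
    have cb: "cmp u \<in> bwords n" by (rule cmp_bwords[OF True])
    define c where "c = 1 / (2 * of_nat (n*(n-1)) :: complex)"
    have 1: "Kop n (Cm n z) u = Cm n z u / 2 - c * (\<Sum>i<n. \<Sum>j<n. if i = j then 0 else Cm n z (swp i j u))"
      using True by (simp add: Kop_def c_def)
    have 2: "(\<Sum>i<n. \<Sum>j<n. if i = j then 0 else Cm n z (swp i j u)) = (\<Sum>i<n. \<Sum>j<n. if i = j then 0 else z (swp i j (cmp u)))"
      by (intro sum.cong refl) (simp add: Cm_def swp_bwords[OF True] cmp_swp lu)
    have 3: "Cm n (Kop n z) u = z (cmp u) / 2 - c * (\<Sum>i<n. \<Sum>j<n. if i = j then 0 else z (swp i j (cmp u)))"
      using True cb by (simp add: Kop_def Cm_def c_def)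
    have 4: "Cm n z u = z (cmp u)" using True by (simp add: Cm_def)
    show ?thesis unfolding 1 2 3 4 ..
  qed (simp add: Kop_def Cm_def)
qed

section \<open>Linear operators and products of linear factors\<close>

definition lin :: "((nat list \<Rightarrow> complex) \<Rightarrow> nat list \<Rightarrow> complex) \<Rightarrow> bool" where
  "lin T \<longleftrightarrow> (\<forall>x y. T (\<lambda>u. x u + y u) = (\<lambda>u. T x u + T y u)) \<and> (\<forall>c x. T (\<lambda>u. c * x u) = (\<lambda>u. c * T x u))"

lemma lin_add: "lin T \<Longrightarrow> T (\<lambda>u. x u + y u) = (\<lambda>u. T x u + T y u)"
  by (simp add: lin_def)
lemma lin_scale: "lin T \<Longrightarrow> T (\<lambda>u. c * x u) = (\<lambda>u. c * T x u)"
  by (simp add: lin_def)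
lemma lin_zero: "lin T \<Longrightarrow> T (\<lambda>u. 0) = (\<lambda>u. 0)"
  using lin_scale[of T 0 "\<lambda>u. 0"] by simp
lemma lin_diff: "lin T \<Longrightarrow> T (\<lambda>u. x u - c * y u) = (\<lambda>u. T x u - c * T y u)"
proof -
  assume T: "lin T"
  have e: "(\<lambda>u. x u - c * y u) = (\<lambda>u. x u + (\<lambda>u. (- c) * y u) u)" by simp
  have "T (\<lambda>u. x u + (\<lambda>u. (- c) * y u) u) = (\<lambda>u. T x u + T (\<lambda>u. (- c) * y u) u)" by (rule lin_add[OF T])
  also have "T (\<lambda>u. (- c) * y u) = (\<lambda>u. (- c) * T y u)" by (rule lin_scale[OF T])
  finally show ?thesis unfolding e by simp
qed
lemma lin_sum:
  assumes "finite A" and T: "lin T"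
  shows "T (\<lambda>u. \<Sum>k\<in>A. f k u) = (\<lambda>u. \<Sum>k\<in>A. T (f k) u)"
  using assms(1)
proof (induction A rule: finite_induct)
  case empty then show ?case using lin_zero[OF T] by simp
next
  case (insert a A)
  then show ?case using lin_add[OF T, of "f a" "\<lambda>u. \<Sum>k\<in>A. f k u"] by simp
qed
lemma lin_comp: "lin S \<Longrightarrow> lin T \<Longrightarrow> lin (\<lambda>x. S (T x))"
  by (simp add: lin_def)

lemma if_zero_add: "(if P then 0 else a + b) = (if P then 0 else a) + (if P then 0 else (b::complex))"
  by simp
lemma if_zero_mult: "(if P then 0 else a * b) = a * (if P then 0 else (b::complex))"
  by simp

lemma lin_Kop: "lin (Kop n)"
proof -
  define c where "c = 1 / (2 * of_nat (n*(n-1)) :: complex)"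
  define S where "S z u = (\<Sum>i<n. \<Sum>j<n. if i = j then 0 else (z::nat list \<Rightarrow> complex) (swp i j u))" for z u
  have K: "Kop n z = (\<lambda>u. if u \<in> bwords n then z u / 2 - c * S z u else 0)" for z
    unfolding Kop_def c_def S_def ..
  have Sadd: "S (\<lambda>u. x u + y u) u = S x u + S y u" for x y u
    unfolding S_def by (simp only: if_zero_add sum.distrib)
  have Sscale: "S (\<lambda>u. a * x u) u = a * S x u" for a x u
    unfolding S_def by (simp only: if_zero_mult sum_distrib_left)
  show ?thesis unfolding lin_def K by (auto simp: fun_eq_iff Sadd Sscale algebra_simps)
qed

lemma lin_Uop: "lin (Uop n)"
  unfolding lin_def Uop_def by (auto simp: fun_eq_iff sum.distrib sum_distrib_left)

lemma lin_Dop: "lin (Dop n)"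
  unfolding lin_def Dop_def by (auto simp: fun_eq_iff sum.distrib sum_distrib_left)

lemma lin_Cm: "lin (Cm n)"
  unfolding lin_def Cm_def by (auto simp: fun_eq_iff)

lemma lin_UD: "lin (\<lambda>z. Uop n (Dop n z))"
  by (rule lin_comp[OF lin_Uop lin_Dop])

definition fac :: "((nat list \<Rightarrow> complex) \<Rightarrow> nat list \<Rightarrow> complex) \<Rightarrow> complex \<Rightarrow> (nat list \<Rightarrow> complex) \<Rightarrow> nat list \<Rightarrow> complex" where
  "fac T c x = (\<lambda>u. T x u - c * x u)"

definition prodop :: "((nat list \<Rightarrow> complex) \<Rightarrow> nat list \<Rightarrow> complex) \<Rightarrow> complex list \<Rightarrow> (nat list \<Rightarrow> complex) \<Rightarrow> nat list \<Rightarrow> complex" where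
  "prodop T cs x = foldr (fac T) cs x"

lemma prodop_Nil[simp]: "prodop T [] x = x" by (simp add: prodop_def)
lemma prodop_Cons[simp]: "prodop T (c#cs) x = fac T c (prodop T cs x)" by (simp add: prodop_def)
lemma prodop_append: "prodop T (xs @ ys) x = prodop T xs (prodop T ys x)" by (simp add: prodop_def)

lemma lin_fac: "lin T \<Longrightarrow> lin (fac T c)"
  unfolding lin_def fac_def by (auto simp: fun_eq_iff algebra_simps)

lemma lin_prodop: "lin T \<Longrightarrow> lin (prodop T cs)"
proof (induction cs)
  case Nil then show ?case by (simp add: lin_def)
next
  case (Cons c cs)
  have "lin (\<lambda>x. fac T c (prodop T cs x))" by (rule lin_comp[OF lin_fac[OF Cons.prems] Cons.IH[OF Cons.prems]])
  then show ?case by simp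
qed

lemma prodop_T: "lin T \<Longrightarrow> T (prodop T cs x) = prodop T cs (T x)"
proof (induction cs)
  case Nil then show ?case by simp
next
  case (Cons c cs)
  have "T (prodop T (c#cs) x) = T (\<lambda>u. T (prodop T cs x) u - c * prodop T cs x u)" by (simp add: fac_def)
  also have "\<dots> = (\<lambda>u. T (T (prodop T cs x)) u - c * T (prodop T cs x) u)" by (rule lin_diff[OF Cons.prems])
  also have "\<dots> = prodop T (c#cs) (T x)" using Cons by (simp add: fac_def)
  finally show ?case .
qed

lemma prodop_fac: "lin T \<Longrightarrow> fac T a (prodop T cs x) = prodop T cs (fac T a x)"
proof -
  assume T: "lin T"
  have "prodop T cs (fac T a x) = prodop T cs (\<lambda>u. T x u - a * x u)" by (simp add: fac_def)
  also have "\<dots> = (\<lambda>u. prodop T cs (T x) u - a * prodop T cs x u)" by (rule lin_diff[OF lin_prodop[OF T]])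
  also have "\<dots> = fac T a (prodop T cs x)" using prodop_T[OF T] by (simp add: fac_def)
  finally show ?thesis by simp
qed

lemma prodop_perm: "lin T \<Longrightarrow> mset xs = mset ys \<Longrightarrow> prodop T xs x = prodop T ys x"
proof (induction xs arbitrary: ys x)
  case Nil then show ?case by simp
next
  case (Cons a xs)
  have "a \<in> set ys" using Cons.prems(2) by (metis list.set_intros(1) set_mset_mset)
  then obtain ys1 ys2 where ys: "ys = ys1 @ a # ys2" by (meson split_list)
  have m: "mset xs = mset (ys1 @ ys2)" using Cons.prems(2) ys by simp
  have "prodop T (a#xs) x = prodop T xs (fac T a x)" using prodop_fac[OF Cons.prems(1)] by simp
  also have "\<dots> = prodop T (ys1 @ ys2) (fac T a x)" by (rule Cons.IH[OF Cons.prems(1) m])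
  also have "\<dots> = prodop T ys1 (prodop T ys2 (fac T a x))" by (rule prodop_append)
  also have "\<dots> = prodop T ys x" using prodop_fac[OF Cons.prems(1)] by (simp add: ys prodop_append)
  finally show ?case .
qed

lemma prodop_zero: "lin T \<Longrightarrow> prodop T cs (\<lambda>u. 0) = (\<lambda>u. 0)"
  by (rule lin_zero[OF lin_prodop])


section \<open>Weight-supported vectors and the spectral argument\<close>

definition wsup :: "nat \<Rightarrow> nat \<Rightarrow> (nat list \<Rightarrow> complex) \<Rightarrow> bool" where
  "wsup n k z \<longleftrightarrow> (\<forall>u. z u \<noteq> 0 \<longrightarrow> u \<in> bwords n \<and> wt u = k)"

lemma sum_nz: "sum f A \<noteq> (0::complex) \<Longrightarrow> \<exists>a\<in>A. f a \<noteq> 0"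
  by (meson sum.neutral)

lemma wsup_Dop_Suc: "wsup n (Suc k) z \<Longrightarrow> wsup n k (Dop n z)"
  unfolding wsup_def
proof (intro allI impI)
  fix u assume w: "\<forall>u. z u \<noteq> 0 \<longrightarrow> u \<in> bwords n \<and> wt u = Suc k" and nz: "Dop n z u \<noteq> 0"
  then have u: "u \<in> bwords n" by (simp add: Dop_def split: if_splits)
  then obtain j where j: "j \<in> Zeros n u" "z (u[j:=1]) \<noteq> 0" using nz sum_nz[of "\<lambda>j. z (u[j:=1])"] by (auto simp: Dop_def)
  then have "wt (u[j:=1]) = Suc k" using w by blast
  then show "u \<in> bwords n \<and> wt u = k" using wt_upd1[OF u j(1)] u by simp
qed

lemma Dop_wsup0: "wsup n 0 z \<Longrightarrow> Dop n z = (\<lambda>u. 0)"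
proof (rule ext, rule ccontr)
  fix u assume w: "wsup n 0 z" and nz: "Dop n z u \<noteq> 0"
  then have u: "u \<in> bwords n" by (simp add: Dop_def split: if_splits)
  then obtain j where j: "j \<in> Zeros n u" "z (u[j:=1]) \<noteq> 0" using nz sum_nz[of "\<lambda>j. z (u[j:=1])"] by (auto simp: Dop_def)
  then have "wt (u[j:=1]) = 0" using w by (auto simp: wsup_def)
  then show False using wt_upd1[OF u j(1)] by simp
qed

lemma wsup_Uop: "wsup n k z \<Longrightarrow> wsup n (Suc k) (Uop n z)"
  unfolding wsup_def
proof (intro allI impI)
  fix u assume w: "\<forall>u. z u \<noteq> 0 \<longrightarrow> u \<in> bwords n \<and> wt u = k" and nz: "Uop n z u \<noteq> 0"
  then have u: "u \<in> bwords n" by (simp add: Uop_def split: if_splits)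
  then obtain i where i: "i \<in> Ones n u" "z (u[i:=0]) \<noteq> 0" using nz sum_nz[of "\<lambda>i. z (u[i:=0])"] by (auto simp: Uop_def)
  then have "wt (u[i:=0]) = k" using w by blast
  then show "u \<in> bwords n \<and> wt u = Suc k" using wt_upd0[OF u i(1)] u by simp
qed

lemma wsup_Kop: "wsup n k z \<Longrightarrow> wsup n k (Kop n z)"
  unfolding wsup_def
proof (intro allI impI)
  fix u assume w: "\<forall>u. z u \<noteq> 0 \<longrightarrow> u \<in> bwords n \<and> wt u = k" and nz: "Kop n z u \<noteq> 0"
  then have u: "u \<in> bwords n" by (simp add: Kop_def split: if_splits)
  show "u \<in> bwords n \<and> wt u = k"
  proof (cases "z u = 0")
    case False then show ?thesis using w by blast
  next
    case True
    then have "(\<Sum>i<n. \<Sum>j<n. if i = j then 0 else z (swp i j u)) \<noteq> 0" using nz u by (auto simp: Kop_def)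
    then obtain i where i: "i < n" "(\<Sum>j<n. if i = j then 0 else z (swp i j u)) \<noteq> 0"
      using sum_nz by blast
    then obtain j where j: "j < n" "(if i = j then 0 else z (swp i j u)) \<noteq> 0"
      using sum_nz by blast
    then have "z (swp i j u) \<noteq> 0" by (simp split: if_splits)
    then have "wt (swp i j u) = k" using w by blast
    then show ?thesis using wt_swp[OF u i(1) j(1)] u by simp
  qed
qed

lemma wsup_UD: "wsup n k z \<Longrightarrow> wsup n k (Uop n (Dop n z))"
proof (cases k)
  case 0
  assume "wsup n k z"
  then have "Dop n z = (\<lambda>u. 0)" using 0 Dop_wsup0 by simp
  then show ?thesis using lin_zero[OF lin_Uop] by (simp add: wsup_def)
next
  case (Suc k')
  assume "wsup n k z"
  then show ?thesis using Suc wsup_Uop wsup_Dop_Suc by simp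
qed

lemma wsup_fac: "wsup n k (T z) \<Longrightarrow> wsup n k z \<Longrightarrow> wsup n k (fac T c z)"
  unfolding wsup_def
proof (intro allI impI)
  fix u assume a: "\<forall>u. T z u \<noteq> 0 \<longrightarrow> u \<in> bwords n \<and> wt u = k" "\<forall>u. z u \<noteq> 0 \<longrightarrow> u \<in> bwords n \<and> wt u = k"
    and nz: "fac T c z u \<noteq> 0"
  then have "T z u \<noteq> 0 \<or> z u \<noteq> 0" by (auto simp: fac_def)
  then show "u \<in> bwords n \<and> wt u = k" using a by blast
qed

lemma wsup_prodop: "(\<And>z. wsup n k z \<Longrightarrow> wsup n k (T z)) \<Longrightarrow> wsup n k z \<Longrightarrow> wsup n k (prodop T cs z)"
  by (induction cs) (auto intro: wsup_fac)

lemma wsup_scale: "wsup n k z \<Longrightarrow> wsup n k (\<lambda>u. c * z u)"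
  by (auto simp: wsup_def)

lemma commutator_w:
  assumes w: "wsup n k z"
  shows "Dop n (Uop n z) = (\<lambda>u. Uop n (Dop n z) u + (of_nat n - 2 * of_nat k) * z u)"
proof (rule ext)
  fix u
  show "Dop n (Uop n z) u = Uop n (Dop n z) u + (of_nat n - 2 * of_nat k) * z u"
  proof (cases "u \<in> bwords n")
    case True
    have "(of_nat n - 2 * of_nat (wt u)) * z u = (of_nat n - 2 * of_nat k) * z u"
      using w by (cases "z u = 0") (auto simp: wsup_def)
    then show ?thesis using commutator[OF True] by simp
  next
    case False
    then have "z u = 0" using w by (auto simp: wsup_def)
    then show ?thesis using False by (simp add: Dop_def Uop_def)
  qed
qed

lemma push_U:
  assumes w: "wsup n k w"
  shows "prodop (\<lambda>z. Uop n (Dop n z)) (map (\<lambda>c. c + (of_nat n - 2 * of_nat k)) cs) (Uop n w)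
       = Uop n (prodop (\<lambda>z. Uop n (Dop n z)) cs w)"
proof (induction cs)
  case Nil then show ?case by simp
next
  case (Cons c cs)
  let ?UD = "\<lambda>z. Uop n (Dop n z)"
  let ?s = "of_nat n - 2 * of_nat k :: complex"
  define p where "p = prodop ?UD cs w"
  have wp: "wsup n k p" unfolding p_def by (rule wsup_prodop[OF wsup_UD w])
  have "prodop ?UD (map (\<lambda>c. c + ?s) (c#cs)) (Uop n w) = fac ?UD (c + ?s) (Uop n p)"
    using Cons.IH by (simp add: p_def)
  also have "\<dots> = (\<lambda>u. Uop n (Dop n (Uop n p)) u - (c + ?s) * Uop n p u)" by (simp add: fac_def)
  also have "Uop n (Dop n (Uop n p)) = Uop n (\<lambda>u. Uop n (Dop n p) u + ?s * p u)"
    by (simp add: commutator_w[OF wp])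
  also have "\<dots> = (\<lambda>u. Uop n (Uop n (Dop n p)) u + ?s * Uop n p u)"
    using lin_add[OF lin_Uop, of n "Uop n (Dop n p)" "\<lambda>u. ?s * p u"] lin_scale[OF lin_Uop, of n ?s p] by simp
  finally have 1: "prodop ?UD (map (\<lambda>c. c + ?s) (c#cs)) (Uop n w) = (\<lambda>u. Uop n (Uop n (Dop n p)) u - c * Uop n p u)"
    by (simp add: algebra_simps)
  have "Uop n (prodop ?UD (c#cs) w) = Uop n (\<lambda>u. Uop n (Dop n p) u - c * p u)" by (simp add: fac_def p_def)
  also have "\<dots> = (\<lambda>u. Uop n (Uop n (Dop n p)) u - c * Uop n p u)" by (rule lin_diff[OF lin_Uop])
  finally show ?case using 1 by simp
qed

definition rr :: "nat \<Rightarrow> nat \<Rightarrow> nat \<Rightarrow> complex" where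
  "rr n k j = (of_nat k - of_nat j) * (of_nat n + 1 - of_nat k - of_nat j)"

lemma rr_Suc: "rr n (Suc k) j = rr n k j + (of_nat n - 2 * of_nat k)"
  by (simp add: rr_def algebra_simps)

lemma spectral_UD:
  "wsup n k z \<Longrightarrow> prodop (\<lambda>z. Uop n (Dop n z)) (map (rr n k) [0..<Suc k]) z = (\<lambda>u. 0)"
proof (induction k arbitrary: z)
  case 0
  have "Dop n z = (\<lambda>u. 0)" using Dop_wsup0[OF 0] .
  then show ?case using lin_zero[OF lin_Uop] by (simp add: fac_def rr_def)
next
  case (Suc k)
  let ?UD = "\<lambda>z. Uop n (Dop n z)"
  let ?s = "of_nat n - 2 * of_nat k :: complex"
  have wD: "wsup n k (Dop n z)" by (rule wsup_Dop_Suc[OF Suc.prems])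
  have m1: "map (rr n (Suc k)) [0..<Suc k] = map (\<lambda>c. c + ?s) (map (rr n k) [0..<Suc k])"
    by (simp add: rr_Suc)
  have m2: "rr n (Suc k) (Suc k) = 0" by (simp add: rr_def)
  have m: "map (rr n (Suc k)) [0..<Suc (Suc k)] = map (\<lambda>c. c + ?s) (map (rr n k) [0..<Suc k]) @ [0]"
    using m1 m2 by simp
  have "prodop ?UD (map (rr n (Suc k)) [0..<Suc (Suc k)]) z
      = prodop ?UD (map (\<lambda>c. c + ?s) (map (rr n k) [0..<Suc k])) (fac ?UD 0 z)"
    unfolding m prodop_append by simp
  also have "fac ?UD 0 z = Uop n (Dop n z)" by (simp add: fac_def)
  also have "prodop ?UD (map (\<lambda>c. c + ?s) (map (rr n k) [0..<Suc k])) (Uop n (Dop n z))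
      = Uop n (prodop ?UD (map (rr n k) [0..<Suc k]) (Dop n z))"
    by (rule push_U[OF wD])
  also have "\<dots> = (\<lambda>u. 0)" using Suc.IH[OF wD] lin_zero[OF lin_Uop] by simp
  finally show ?case .
qed


lemma UD_Kop:
  assumes n: "2 \<le> n" and w: "wsup n k Q"
  shows "Uop n (Dop n Q) = (\<lambda>u. of_nat k * (of_nat n - of_nat k + 1) * Q u - of_nat (n*(n-1)) * Kop n Q u)"
proof (rule ext)
  fix u
  have N: "of_nat (n*(n-1)) \<noteq> (0::complex)" using n by simp
  show "Uop n (Dop n Q) u = of_nat k * (of_nat n - of_nat k + 1) * Q u - of_nat (n*(n-1)) * Kop n Q u"
  proof (cases "u \<in> bwords n")
    case True
    have e: "of_nat (wt u) * (of_nat n - of_nat (wt u) + 1) * Q u = of_nat k * (of_nat n - of_nat k + 1) * Q u"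
      using w by (cases "Q u = 0") (auto simp: wsup_def)
    define A where "A = of_nat k * (of_nat n - of_nat k + 1) * Q u"
    define K where "K = of_nat (n*(n-1)) * Kop n Q u"
    have h: "K = A - Uop n (Dop n Q) u"
      using Kop_UD[OF n True, of Q] N e unfolding A_def K_def by simp
    have "Uop n (Dop n Q) u = A - (A - Uop n (Dop n Q) u)" by simp
    also have "\<dots> = A - K" using h by simp
    finally show ?thesis unfolding A_def K_def .
  next
    case False
    then have "Q u = 0" using w by (auto simp: wsup_def)
    then show ?thesis using False by (simp add: Uop_def Kop_def)
  qed
qed

lemma beta_eq:
  assumes n: "2 \<le> n" and j: "j \<le> n"
  shows "beta n (n - j) = of_nat j * (of_nat n - of_nat j + 1) / of_nat (n*(n-1))"
proof -
  have d: "real n * (real n - 1) \<noteq> 0" using n by simp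
  have "2 * (real n - real (n - j)) * (2 * real (n - j) + 2) / (4 * real n * (real n - 1))
      = real j * (real n - real j + 1) / (real n * (real n - 1))"
    using j d by (simp add: of_nat_diff field_simps)
  also have "\<dots> = real j * (real n - real j + 1) / real (n * (n - 1))"
    using n by (simp add: of_nat_diff)
  finally have e: "2 * (real n - real (n - j)) * (2 * real (n - j) + 2) / (4 * real n * (real n - 1))
      = real j * (real n - real j + 1) / real (n * (n - 1))" .
  show ?thesis unfolding beta_def e by simp
qed

lemma beta_n: "beta n n = 0"
  by (simp add: beta_def)

lemma beta_nz:
  assumes "2 \<le> n" "m < n"
  shows "beta n m \<noteq> 0"
proof -
  have a: "real n - real m > 0" using assms by simp
  have b: "2 * real m + 2 > 0" by simp
  have c: "real n - 1 > 0" "real n > 0" using assms by simp_all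
  have "2 * (real n - real m) * (2 * real m + 2) / (4 * real n * (real n - 1)) > 0"
    using a b c by (intro divide_pos_pos mult_pos_pos) auto
  then have "2 * (real n - real m) * (2 * real m + 2) / (4 * real n * (real n - 1)) \<noteq> 0" by linarith
  then show ?thesis unfolding beta_def of_real_eq_0_iff .
qed

lemma UD_fac:
  assumes n: "2 \<le> n" and w: "wsup n k Q" and j: "j \<le> n"
  shows "fac (\<lambda>z. Uop n (Dop n z)) (rr n k j) Q = (\<lambda>u. (- of_nat (n*(n-1))) * fac (Kop n) (beta n (n - j)) Q u)"
proof -
  have N: "of_nat (n*(n-1)) \<noteq> (0::complex)" using n by simp
  have "of_nat (n*(n-1)) * beta n (n - j) = of_nat j * (of_nat n - of_nat j + 1)"
    using N by (simp add: beta_eq[OF n j])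
  also have "\<dots> = of_nat k * (of_nat n - of_nat k + 1) - rr n k j"
    by (simp add: rr_def algebra_simps)
  finally have b: "of_nat (n*(n-1)) * beta n (n - j) = of_nat k * (of_nat n - of_nat k + 1) - rr n k j" .
  show ?thesis
  proof (rule ext)
    fix u
    have "fac (\<lambda>z. Uop n (Dop n z)) (rr n k j) Q u
      = of_nat k * (of_nat n - of_nat k + 1) * Q u - of_nat (n*(n-1)) * Kop n Q u - rr n k j * Q u"
      by (simp add: fac_def UD_Kop[OF n w])
    also have "\<dots> = (- of_nat (n*(n-1))) * (Kop n Q u - beta n (n - j) * Q u)"
    proof -
      define N where "N = (of_nat (n*(n-1)) :: complex)"
      define B where "B = beta n (n - j)"
      define A where "A = (of_nat k * (of_nat n - of_nat k + 1) :: complex)"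
      define R where "R = rr n k j"
      have bb: "N * B = A - R" using b unfolding N_def B_def A_def R_def .
      have "(- N) * (Kop n Q u - B * Q u) = - (N * Kop n Q u) + (N * B) * Q u" by (simp add: algebra_simps)
      also have "\<dots> = - (N * Kop n Q u) + (A - R) * Q u" by (simp only: bb)
      also have "\<dots> = A * Q u - N * Kop n Q u - R * Q u" by (simp add: algebra_simps)
      finally show ?thesis unfolding N_def B_def A_def R_def by simp
    qed
    finally show "fac (\<lambda>z. Uop n (Dop n z)) (rr n k j) Q u = (- of_nat (n*(n-1))) * fac (Kop n) (beta n (n - j)) Q u"
      by (simp add: fac_def)
  qed
qed

lemma UD_Kop_prod:
  assumes n: "2 \<le> n" and w: "wsup n k z" and js: "\<forall>j\<in>set js. j \<le> n"
  shows "prodop (\<lambda>z. Uop n (Dop n z)) (map (rr n k) js) z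
       = (\<lambda>u. (- of_nat (n*(n-1))) ^ length js * prodop (Kop n) (map (\<lambda>j. beta n (n - j)) js) z u)"
  using js
proof (induction js)
  case Nil then show ?case by simp
next
  case (Cons j js)
  let ?UD = "\<lambda>z. Uop n (Dop n z)"
  let ?N = "- of_nat (n*(n-1)) :: complex"
  define Q where "Q = prodop (Kop n) (map (\<lambda>j. beta n (n - j)) js) z"
  have wQ: "wsup n k Q" unfolding Q_def by (rule wsup_prodop[OF wsup_Kop w])
  have IH: "prodop ?UD (map (rr n k) js) z = (\<lambda>u. ?N ^ length js * Q u)"
    using Cons by (simp add: Q_def)
  have "prodop ?UD (map (rr n k) (j#js)) z = fac ?UD (rr n k j) (\<lambda>u. ?N ^ length js * Q u)"
    using IH by simp
  also have "\<dots> = (\<lambda>u. ?N ^ length js * fac ?UD (rr n k j) Q u)"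
    unfolding fac_def using lin_scale[OF lin_UD, of n "?N ^ length js" Q] by (simp add: algebra_simps)
  also have "\<dots> = (\<lambda>u. ?N ^ length (j#js) * fac (Kop n) (beta n (n - j)) Q u)"
    using UD_fac[OF n wQ, of j] Cons.prems by (simp add: mult_ac)
  finally show ?case by (simp add: Q_def)
qed

lemma spectral_K:
  assumes n: "2 \<le> n" and k: "k \<le> n" and w: "wsup n k z"
  shows "prodop (Kop n) (map (\<lambda>j. beta n (n - j)) [0..<Suc k]) z = (\<lambda>u. 0)"
proof (rule ext)
  fix u
  have N: "(- of_nat (n*(n-1)) :: complex) ^ Suc k \<noteq> 0" using n by simp
  have "(\<lambda>u. (- of_nat (n*(n-1))) ^ length [0..<Suc k] * prodop (Kop n) (map (\<lambda>j. beta n (n - j)) [0..<Suc k]) z u) = (\<lambda>u. 0)"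
    using UD_Kop_prod[OF n w, of "[0..<Suc k]"] spectral_UD[OF w] k by simp
  then have "(- of_nat (n*(n-1))) ^ Suc k * prodop (Kop n) (map (\<lambda>j. beta n (n - j)) [0..<Suc k]) z u = 0"
    by (metis length_upt diff_zero)
  then show "prodop (Kop n) (map (\<lambda>j. beta n (n - j)) [0..<Suc k]) z u = 0" using N by simp
qed


lemma mset_target:
  assumes k: "2 * k \<le> n"
  shows "mset (n # [(n+1) div 2..<n]) = mset ([(n+1) div 2..<n-k] @ map (\<lambda>j. n - j) [0..<Suc k])"
proof -
  let ?c = "(n+1) div 2"
  have ck: "?c \<le> n - k" using k by linarith
  have inj: "inj_on (\<lambda>j. n - j) {0..<Suc k}" using k by (auto simp: inj_on_def)
  have d1: "distinct (n # [?c..<n])" by simp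
  have kn: "k \<le> n" using k by simp
  have da: "distinct (map (\<lambda>j. n - j) [0..<Suc k])"
    unfolding distinct_map using kn by (auto simp: inj_on_def)
  have db: "set [?c..<n-k] \<inter> set (map (\<lambda>j. n - j) [0..<Suc k]) = {}" by auto
  have d2: "distinct ([?c..<n-k] @ map (\<lambda>j. n - j) [0..<Suc k])"
    using da db by (simp only: distinct_append distinct_upt)
  have "set (n # [?c..<n]) = set ([?c..<n-k] @ map (\<lambda>j. n - j) [0..<Suc k])"
  proof (rule set_eqI)
    fix x
    show "x \<in> set (n # [?c..<n]) \<longleftrightarrow> x \<in> set ([?c..<n-k] @ map (\<lambda>j. n - j) [0..<Suc k])"
    proof
      assume "x \<in> set (n # [?c..<n])"
      then have x: "?c \<le> x" "x \<le> n" using ck k by auto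
      show "x \<in> set ([?c..<n-k] @ map (\<lambda>j. n - j) [0..<Suc k])"
      proof (cases "x < n - k")
        case True then show ?thesis using x by simp
      next
        case False
        then have a: "n - x \<in> {0..<Suc k}" "x = n - (n - x)" using x by auto
        have "x \<in> set (map (\<lambda>j. n - j) [0..<Suc k])" unfolding set_map set_upt
          by (rule image_eqI[where f = "\<lambda>j. n - j" and x = "n - x", OF a(2) a(1)])
        then show ?thesis by (simp only: set_append) blast
      qed
    next
      assume "x \<in> set ([?c..<n-k] @ map (\<lambda>j. n - j) [0..<Suc k])"
      then show "x \<in> set (n # [?c..<n])" using ck k by auto
    qed
  qed
  then show ?thesis using set_eq_iff_mset_eq_distinct[OF d1 d2] by simp
qed

lemma PK_wsup:
  assumes n: "2 \<le> n" and k: "2 * k \<le> n" and w: "wsup n k z"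
  shows "prodop (Kop n) (map (beta n) (n # [(n+1) div 2..<n])) z = (\<lambda>u. 0)"
proof -
  let ?c = "(n+1) div 2"
  let ?A = "map (\<lambda>j. beta n (n - j)) [0..<Suc k]"
  let ?B = "map (beta n) [?c..<n-k]"
  have "mset (map (beta n) (n # [?c..<n])) = mset (map (beta n) ([?c..<n-k] @ map (\<lambda>j. n - j) [0..<Suc k]))"
    unfolding mset_map mset_target[OF k] ..
  also have "map (beta n) ([?c..<n-k] @ map (\<lambda>j. n - j) [0..<Suc k]) = ?B @ ?A" by simp
  finally have m: "mset (map (beta n) (n # [?c..<n])) = mset (?B @ ?A)" .
  have "prodop (Kop n) (map (beta n) (n # [?c..<n])) z = prodop (Kop n) (?B @ ?A) z"
    by (rule prodop_perm[OF lin_Kop m])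
  also have "\<dots> = prodop (Kop n) ?B (prodop (Kop n) ?A z)" by (rule prodop_append)
  also have "prodop (Kop n) ?A z = (\<lambda>u. 0)" using spectral_K[OF n _ w] k by simp
  also have "prodop (Kop n) ?B (\<lambda>u. 0) = (\<lambda>u. 0)" by (rule prodop_zero[OF lin_Kop])
  finally show ?thesis .
qed

lemma prodop_Cm: "prodop (Kop n) cs (Cm n z) = Cm n (prodop (Kop n) cs z)"
proof (induction cs)
  case Nil then show ?case by simp
next
  case (Cons c cs)
  have "prodop (Kop n) (c#cs) (Cm n z) = (\<lambda>u. Kop n (Cm n (prodop (Kop n) cs z)) u - c * Cm n (prodop (Kop n) cs z) u)"
    using Cons by (simp add: fac_def)
  also have "\<dots> = (\<lambda>u. Cm n (Kop n (prodop (Kop n) cs z)) u - c * Cm n (prodop (Kop n) cs z) u)"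
    by (simp add: Kop_Cm)
  also have "\<dots> = Cm n (\<lambda>u. Kop n (prodop (Kop n) cs z) u - c * prodop (Kop n) cs z u)"
    by (rule lin_diff[OF lin_Cm, symmetric])
  finally show ?case by (simp add: fac_def)
qed

lemma wsup_Cm:
  assumes w: "wsup n k z" and k: "k \<le> n"
  shows "wsup n (n - k) (Cm n z)"
  unfolding wsup_def
proof (intro allI impI)
  fix u assume nz: "Cm n z u \<noteq> 0"
  then have u: "u \<in> bwords n" and z: "z (cmp u) \<noteq> 0" by (auto simp: Cm_def split: if_splits)
  then have "wt (cmp u) = k" using w by (auto simp: wsup_def)
  then show "u \<in> bwords n \<and> wt u = n - k" using wt_cmp[OF u] wt_le[OF u] u by simp
qed

lemma Cm_Cm:
  assumes "\<forall>u. u \<notin> bwords n \<longrightarrow> z u = 0"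
  shows "Cm n (Cm n z) = z"
proof (rule ext)
  fix u show "Cm n (Cm n z) u = z u"
    using assms cmp_bwords[of u n] cmp_cmp[of u n] by (auto simp: Cm_def)
qed

lemma PK_wsup_all:
  assumes n: "2 \<le> n" and k: "k \<le> n" and w: "wsup n k z"
  shows "prodop (Kop n) (map (beta n) (n # [(n+1) div 2..<n])) z = (\<lambda>u. 0)"
proof (cases "2 * k \<le> n")
  case True then show ?thesis using PK_wsup[OF n True w] by simp
next
  case False
  let ?T = "map (beta n) (n # [(n+1) div 2..<n])"
  have w': "wsup n (n - k) (Cm n z)" by (rule wsup_Cm[OF w k])
  have "2 * (n - k) \<le> n" using False by linarith
  then have 0: "prodop (Kop n) ?T (Cm n z) = (\<lambda>u. 0)" by (rule PK_wsup[OF n _ w'])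
  have wp: "wsup n k (prodop (Kop n) ?T z)" by (rule wsup_prodop[OF wsup_Kop w])
  then have sp: "\<forall>u. u \<notin> bwords n \<longrightarrow> prodop (Kop n) ?T z u = 0" by (auto simp: wsup_def)
  have "prodop (Kop n) ?T z = Cm n (Cm n (prodop (Kop n) ?T z))" using Cm_Cm[OF sp] by simp
  also have "\<dots> = Cm n (prodop (Kop n) ?T (Cm n z))" by (simp only: prodop_Cm)
  also have "\<dots> = (\<lambda>u. 0)" unfolding 0 by (simp add: Cm_def)
  finally show ?thesis .
qed

definition wpart :: "nat \<Rightarrow> nat \<Rightarrow> (nat list \<Rightarrow> complex) \<Rightarrow> nat list \<Rightarrow> complex" where
  "wpart n k z = (\<lambda>u. if u \<in> bwords n \<and> wt u = k then z u else 0)"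

lemma wsup_wpart: "wsup n k (wpart n k z)"
  by (simp add: wsup_def wpart_def)

lemma wpart_sum:
  assumes "\<forall>u. u \<notin> bwords n \<longrightarrow> z u = 0"
  shows "z = (\<lambda>u. \<Sum>k\<in>{..n}. wpart n k z u)"
proof (rule ext)
  fix u
  show "z u = (\<Sum>k\<in>{..n}. wpart n k z u)"
  proof (cases "u \<in> bwords n")
    case True
    have "(\<Sum>k\<in>{..n}. wpart n k z u) = (\<Sum>k\<in>{..n}. if wt u = k then z u else 0)"
      using True by (simp add: wpart_def)
    also have "\<dots> = z u" using wt_le[OF True] by (simp add: sum.delta)
    finally show ?thesis by simp
  next
    case False then show ?thesis using assms by (simp add: wpart_def)
  qed
qed

lemma PK:
  assumes n: "2 \<le> n" and sp: "\<forall>u. u \<notin> bwords n \<longrightarrow> z u = 0"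
  shows "prodop (Kop n) (map (beta n) (n # [(n+1) div 2..<n])) z = (\<lambda>u. 0)"
proof -
  let ?T = "map (beta n) (n # [(n+1) div 2..<n])"
  have "prodop (Kop n) ?T z = prodop (Kop n) ?T (\<lambda>u. \<Sum>k\<in>{..n}. wpart n k z u)"
    using wpart_sum[OF sp] by simp
  also have "\<dots> = (\<lambda>u. \<Sum>k\<in>{..n}. prodop (Kop n) ?T (wpart n k z) u)"
    by (rule lin_sum[OF _ lin_prodop[OF lin_Kop]]) simp
  also have "\<dots> = (\<lambda>u. \<Sum>k\<in>{..n}. 0)"
    using PK_wsup_all[OF n _ wsup_wpart] by simp
  finally show ?thesis by simp
qed


section \<open>The idempotent in the matrix model\<close>

definition supp :: "nat \<Rightarrow> (nat list \<Rightarrow> complex) \<Rightarrow> bool" where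
  "supp n w \<longleftrightarrow> (\<forall>u. u \<notin> bwords n \<longrightarrow> w u = 0)"

lemma supp_op: "supp n (op n x z)" by (simp add: supp_def op_def)
lemma supp_restr: "supp n (restr n z)" by (simp add: supp_def restr_def)
lemma restr_supp: "supp n w \<Longrightarrow> restr n w = w" by (auto simp: supp_def restr_def fun_eq_iff)
lemma supp_Kop: "supp n (Kop n z)" by (simp add: supp_def Kop_def)

definition Fm :: "nat \<Rightarrow> nat \<Rightarrow> (nat list \<Rightarrow> complex) \<Rightarrow> nat list \<Rightarrow> complex" where
  "Fm n m a = (\<lambda>u. (1 / (beta n n - beta n m)) * (Kop n a u - beta n m * a u))"

lemma supp_Fm: "supp n a \<Longrightarrow> supp n (Fm n m a)"
  by (simp add: supp_def Fm_def Kop_def)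

lemma supp_foldr_Fm: "supp n a \<Longrightarrow> supp n (foldr (Fm n) ms a)"
  by (induction ms) (auto intro: supp_Fm)

definition Gm :: "nat \<Rightarrow> nat \<Rightarrow> nat list \<Rightarrow> complex" where
  "Gm n m = tscale (1 / (beta n n - beta n m)) (tadd (deltaH n) (tscale (- beta n m) (tone n)))"

lemma eH_foldr: "n \<noteq> 1 \<Longrightarrow> eH n = foldr (\<lambda>m acc. tmul n (Gm n m) acc) [(n + 1) div 2..<n] (tone n)"
  by (simp add: eH_def Gm_def)

lemma op_foldr_tmul: "op n (foldr (\<lambda>m acc. tmul n (Gm n m) acc) ms (tone n)) z = foldr (\<lambda>m a. op n (Gm n m) a) ms (restr n z)"
  by (induction ms) (simp_all add: op_tmul op_tone)

lemma op_Gm: "2 \<le> n \<Longrightarrow> supp n a \<Longrightarrow> op n (Gm n m) a = Fm n m a"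
  unfolding Gm_def Fm_def by (simp add: op_tscale op_tadd op_Delta op_tone restr_supp algebra_simps)

lemma foldr_Gm_Fm: "2 \<le> n \<Longrightarrow> supp n w \<Longrightarrow> foldr (\<lambda>m a. op n (Gm n m) a) ms w = foldr (Fm n) ms w"
proof (induction ms)
  case Nil then show ?case by simp
next
  case (Cons m ms)
  then show ?case using op_Gm[OF Cons.prems(1) supp_foldr_Fm[OF Cons.prems(2)]] by simp
qed

lemma op_eH: "2 \<le> n \<Longrightarrow> op n (eH n) z = foldr (Fm n) [(n + 1) div 2..<n] (restr n z)"
  using eH_foldr[of n] op_foldr_tmul foldr_Gm_Fm[OF _ supp_restr] by simp

lemma foldr_Fm_prod:
  "foldr (Fm n) ms a = (\<lambda>u. (\<Prod>m\<leftarrow>ms. 1 / (beta n n - beta n m)) * prodop (Kop n) (map (beta n) ms) a u)"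
proof (induction ms)
  case Nil then show ?case by simp
next
  case (Cons m ms)
  let ?P = "\<Prod>m\<leftarrow>ms. 1 / (beta n n - beta n m)"
  let ?Q = "prodop (Kop n) (map (beta n) ms) a"
  have "foldr (Fm n) (m#ms) a = Fm n m (\<lambda>u. ?P * ?Q u)" using Cons by simp
  also have "\<dots> = (\<lambda>u. (1 / (beta n n - beta n m)) * (?P * Kop n ?Q u - beta n m * (?P * ?Q u)))"
    unfolding Fm_def using lin_scale[OF lin_Kop, of n ?P ?Q] by simp
  also have "\<dots> = (\<lambda>u. (1 / (beta n n - beta n m) * ?P) * fac (Kop n) (beta n m) ?Q u)"
    by (simp add: fac_def algebra_simps)
  finally show ?case by simp
qed

lemma Kop_eH:
  assumes n: "2 \<le> n"
  shows "Kop n (op n (eH n) z) = (\<lambda>u. 0)"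
proof -
  let ?ms = "[(n + 1) div 2..<n]"
  let ?P = "\<Prod>m\<leftarrow>?ms. 1 / (beta n n - beta n m)"
  let ?Q = "prodop (Kop n) (map (beta n) ?ms) (restr n z)"
  have "Kop n (op n (eH n) z) = Kop n (\<lambda>u. ?P * ?Q u)"
    using op_eH[OF n] foldr_Fm_prod by simp
  also have "\<dots> = (\<lambda>u. ?P * Kop n ?Q u)" by (rule lin_scale[OF lin_Kop])
  also have "Kop n ?Q = prodop (Kop n) (map (beta n) (n # ?ms)) (restr n z)"
    by (simp add: fac_def beta_n)
  also have "\<dots> = (\<lambda>u. 0)" using PK[OF n] supp_restr[of n z] by (simp add: supp_def)
  finally show ?thesis by simp
qed

lemma foldr_Fm_fix:
  assumes n: "2 \<le> n" and K: "Kop n w = (\<lambda>u. 0)" and ms: "\<forall>m\<in>set ms. m < n"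
  shows "foldr (Fm n) ms w = w"
  using ms
proof (induction ms)
  case Nil then show ?case by simp
next
  case (Cons m ms)
  have b: "beta n m \<noteq> 0" using beta_nz[OF n] Cons.prems by simp
  have "foldr (Fm n) (m#ms) w = Fm n m w" using Cons by simp
  also have "\<dots> = w" using b K by (simp add: Fm_def beta_n fun_eq_iff)
  finally show ?case .
qed

lemma op_eH_fix:
  assumes n: "2 \<le> n" and sw: "supp n w" and K: "Kop n w = (\<lambda>u. 0)"
  shows "op n (eH n) w = w"
  using op_eH[OF n, of w] restr_supp[OF sw] foldr_Fm_fix[OF n K] by simp

lemma tone1: "eH (Suc 0) = tone (Suc 0)" by (simp add: eH_def)

lemma op_eH_idem:
  assumes n: "1 \<le> n"
  shows "op n (eH n) (op n (eH n) z) = op n (eH n) z"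
proof (cases "n = 1")
  case True then show ?thesis by (simp add: tone1 op_tone restr_def fun_eq_iff)
next
  case False
  then have n2: "2 \<le> n" using n by simp
  show ?thesis by (rule op_eH_fix[OF n2 supp_op Kop_eH[OF n2]])
qed

definition Dg :: "nat \<Rightarrow> (nat list \<Rightarrow> complex) \<Rightarrow> (nat list \<Rightarrow> complex) \<Rightarrow> nat list \<Rightarrow> complex" where
  "Dg n \<rho> z = (\<lambda>u. if u \<in> bwords n then \<rho> u * z u else 0)"

definition swinv :: "nat \<Rightarrow> (nat list \<Rightarrow> complex) \<Rightarrow> bool" where
  "swinv n \<rho> \<longleftrightarrow> (\<forall>u i j. u \<in> bwords n \<longrightarrow> i < n \<longrightarrow> j < n \<longrightarrow> \<rho> (swp i j u) = \<rho> u)"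

lemma Kop_Dg:
  assumes r: "swinv n \<rho>"
  shows "Kop n (Dg n \<rho> z) = Dg n \<rho> (Kop n z)"
proof (rule ext)
  fix u
  show "Kop n (Dg n \<rho> z) u = Dg n \<rho> (Kop n z) u"
  proof (cases "u \<in> bwords n")
    case True
    define c where "c = 1 / (2 * of_nat (n*(n-1)) :: complex)"
    have "(\<Sum>i<n. \<Sum>j<n. if i = j then 0 else Dg n \<rho> z (swp i j u))
        = (\<Sum>i<n. \<Sum>j<n. \<rho> u * (if i = j then 0 else z (swp i j u)))"
      using r True by (intro sum.cong refl) (auto simp: Dg_def swp_bwords swinv_def)
    also have "\<dots> = \<rho> u * (\<Sum>i<n. \<Sum>j<n. if i = j then 0 else z (swp i j u))"
      by (simp add: sum_distrib_left)
    finally have S: "(\<Sum>i<n. \<Sum>j<n. if i = j then 0 else Dg n \<rho> z (swp i j u))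
        = \<rho> u * (\<Sum>i<n. \<Sum>j<n. if i = j then 0 else z (swp i j u))" .
    have "Kop n (Dg n \<rho> z) u = Dg n \<rho> z u / 2 - c * (\<Sum>i<n. \<Sum>j<n. if i = j then 0 else Dg n \<rho> z (swp i j u))"
      using True by (simp add: Kop_def c_def)
    also have "\<dots> = \<rho> u * (z u / 2 - c * (\<Sum>i<n. \<Sum>j<n. if i = j then 0 else z (swp i j u)))"
      unfolding S using True by (simp add: Dg_def algebra_simps)
    also have "\<dots> = Dg n \<rho> (Kop n z) u" using True by (simp add: Dg_def Kop_def c_def)
    finally show ?thesis .
  qed (simp add: Kop_def Dg_def)
qed

lemma Fm_Dg: "swinv n \<rho> \<Longrightarrow> Fm n m (Dg n \<rho> a) = Dg n \<rho> (Fm n m a)"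
proof -
  assume r: "swinv n \<rho>"
  show ?thesis unfolding Fm_def Kop_Dg[OF r]
    by (rule ext) (simp add: Dg_def algebra_simps)
qed

lemma foldr_Fm_Dg: "swinv n \<rho> \<Longrightarrow> foldr (Fm n) ms (Dg n \<rho> a) = Dg n \<rho> (foldr (Fm n) ms a)"
  by (induction ms) (simp_all add: Fm_Dg)

lemma restr_Dg: "restr n (Dg n \<rho> z) = Dg n \<rho> (restr n z)"
  by (auto simp: restr_def Dg_def fun_eq_iff)

lemma op_eH_Dg:
  assumes n: "1 \<le> n" and r: "swinv n \<rho>"
  shows "op n (eH n) (Dg n \<rho> z) = Dg n \<rho> (op n (eH n) z)"
proof (cases "n = 1")
  case True then show ?thesis by (simp add: tone1 op_tone restr_Dg)
next
  case False
  then have n2: "2 \<le> n" using n by simp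
  show ?thesis unfolding op_eH[OF n2] restr_Dg foldr_Fm_Dg[OF r] ..
qed


section \<open>Elements of Sym^n C[e_1] act diagonally\<close>

lemma kr_diag:
  "set w \<subseteq> {0,1} \<Longrightarrow> length w = length u \<Longrightarrow> length u = length v \<Longrightarrow> u \<noteq> v \<Longrightarrow> kr w u v = 0"
proof (induction w arbitrary: u v)
  case Nil then show ?case by simp
next
  case (Cons a w)
  from Cons.prems obtain b u' where u: "u = b#u'" by (cases u) auto
  from Cons.prems obtain c v' where v: "v = c#v'" by (cases v) auto
  have a: "a = 0 \<or> a = 1" using Cons.prems(1) by auto
  show ?case
  proof (cases "b = c")
    case True
    then have "u' \<noteq> v'" using Cons.prems(4) u v by simp
    then have "kr w u' v' = 0" using Cons.IH[of u' v'] Cons.prems u v by simp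
    then show ?thesis using u v by simp
  next
    case False
    then have "Mq a b c = 0" using a by (auto simp: Mq_def)
    then show ?thesis using u v by simp
  qed
qed

lemma phi_SymC_offdiag:
  assumes r: "r \<in> SymC n" and u: "u \<in> bwords n" and v: "v \<in> bwords n" and uv: "u \<noteq> v"
  shows "phi n r u v = 0"
  unfolding phi_def
proof (rule sum.neutral, rule ballI)
  fix w assume w: "w \<in> words n"
  show "r w * kr w u v = 0"
  proof (cases "r w = 0")
    case False
    then have "set w \<subseteq> {0,1}" using r by (simp add: SymC_def)
    then have "kr w u v = 0" using kr_diag[OF _ _ _ uv] w u v by (auto simp: words_def bwords_def)
    then show ?thesis by simp
  qed simp
qed

lemma op_SymC:
  assumes r: "r \<in> SymC n"
  shows "op n r z = Dg n (\<lambda>u. phi n r u u) z"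
proof (rule ext)
  fix u
  show "op n r z u = Dg n (\<lambda>u. phi n r u u) z u"
  proof (cases "u \<in> bwords n")
    case True
    have "op n r z u = (\<Sum>v\<in>bwords n. (if u = v then 1 else 0) * (phi n r u u * z u))"
      using True phi_SymC_offdiag[OF r True] by (simp add: op_def) (intro sum.cong, auto)
    also have "\<dots> = phi n r u u * z u" using True by (simp add: sum_delta_mult3)
    finally show ?thesis using True by (simp add: Dg_def)
  qed (simp add: op_def Dg_def)
qed

lemma swinv_SymC:
  assumes r: "r \<in> SymC n"
  shows "swinv n (\<lambda>u. phi n r u u)"
  unfolding swinv_def
proof (intro allI impI)
  fix u i j assume u: "u \<in> bwords n" and i: "i < n" and j: "j < n"
  let ?\<sigma> = "Transposition.transpose i j"
  have \<sigma>: "?\<sigma> permutes {..<n}" using i j by (intro permutes_swap_id) auto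
  have lu: "length u = n" using u by (simp add: bwords_len)
  have "phi n r (swp i j u) (swp i j u) = phi n r (wperm n ?\<sigma> u) (wperm n ?\<sigma> u)"
    using wperm_transpose[OF lu i j] by simp
  also have "\<dots> = (\<Sum>w\<in>words n. r (wperm n ?\<sigma> w) * kr w u u)"
    by (rule phi_wperm[OF \<sigma> lu lu, symmetric])
  also have "\<dots> = (\<Sum>w\<in>words n. r w * kr w u u)"
    using r \<sigma> by (intro sum.cong refl) (auto simp: SymC_def)
  also have "\<dots> = phi n r u u" by (simp add: phi_def)
  finally show "phi n r (swp i j u) (swp i j u) = phi n r u u" .
qed

definition xk :: "nat \<Rightarrow> nat \<Rightarrow> nat list \<Rightarrow> complex" where
  "xk n k = (\<lambda>v. if v \<in> bwords n \<and> wt v = k then 1 else 0)"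

lemma Kop_xk:
  assumes n: "2 \<le> n"
  shows "Kop n (xk n k) = (\<lambda>u. 0)"
proof (rule ext)
  fix u
  show "Kop n (xk n k) u = 0"
  proof (cases "u \<in> bwords n")
    case True
    have "(\<Sum>i<n. \<Sum>j<n. if i = j then 0 else xk n k (swp i j u)) = (\<Sum>i<n. \<Sum>j<n. if i = j then 0 else xk n k u)"
      using True by (intro sum.cong refl) (simp add: xk_def swp_bwords wt_swp)
    also have "\<dots> = (\<Sum>i<n. of_nat (n - 1) * xk n k u)"
      by (intro sum.cong refl) (simp add: sum_offdiag_const)
    also have "\<dots> = of_nat (n * (n - 1)) * xk n k u" using n by (simp add: of_nat_diff)
    finally have S: "(\<Sum>i<n. \<Sum>j<n. if i = j then 0 else xk n k (swp i j u)) = of_nat (n * (n - 1)) * xk n k u" .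
    have N: "of_nat (n * (n - 1)) \<noteq> (0::complex)" using n by simp
    show ?thesis using True N unfolding Kop_def S by simp
  qed (simp add: Kop_def)
qed

lemma op_eH_xk:
  assumes n: "1 \<le> n"
  shows "op n (eH n) (xk n k) = xk n k"
proof (cases "n = 1")
  case True then show ?thesis by (auto simp: tone1 op_tone restr_def xk_def fun_eq_iff)
next
  case False
  then have n2: "2 \<le> n" using n by simp
  show ?thesis by (rule op_eH_fix[OF n2 _ Kop_xk[OF n2]]) (simp add: supp_def xk_def)
qed

lemma tone_tc: "tone n \<in> tcarrier n"
  by (auto simp: tcarrier_def tone_def replicate_words)

lemma tmul_tc: "tmul n x y \<in> tcarrier n"
  unfolding tcarrier_def
proof (intro CollectI allI impI)
  fix u assume u: "u \<notin> words n"
  show "tmul n x y u = 0" unfolding tmul_def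
    using u map2_qidx_words by (intro sum.neutral ballI) auto
qed

lemma eH_tc: "eH n \<in> tcarrier n"
proof (cases "n = 1")
  case True then show ?thesis by (simp add: eH_def tone_tc)
next
  case False
  have "foldr (\<lambda>m acc. tmul n (Gm n m) acc) ms (tone n) \<in> tcarrier n" for ms
    by (cases ms) (simp_all add: tone_tc tmul_tc)
  then show ?thesis using eH_foldr[OF False] by simp
qed

lemma SymC_tc: "r \<in> SymC n \<Longrightarrow> r \<in> tcarrier n"
  by (simp add: SymC_def)

lemma tmul_tadd: "tmul n (tadd r s) e = tadd (tmul n r e) (tmul n s e)"
proof (rule ext)
  fix u
  have "tmul n (tadd r s) e u = (\<Sum>w\<in>words n. \<Sum>v\<in>words n.
      (if map2 qidx w v = u then wsgn w v * r w * e v else 0) + (if map2 qidx w v = u then wsgn w v * s w * e v else 0))"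
    unfolding tmul_def tadd_def by (intro sum.cong refl) (simp add: algebra_simps)
  also have "\<dots> = tmul n r e u + tmul n s e u" unfolding tmul_def by (simp add: sum.distrib)
  finally show "tmul n (tadd r s) e u = tadd (tmul n r e) (tmul n s e) u" by (simp add: tadd_def)
qed

lemma tmul_tscale: "tmul n (tscale c r) e = tscale c (tmul n r e)"
proof (rule ext)
  fix u
  have "tmul n (tscale c r) e u = (\<Sum>w\<in>words n. \<Sum>v\<in>words n.
      c * (if map2 qidx w v = u then wsgn w v * r w * e v else 0))"
    unfolding tmul_def tscale_def by (intro sum.cong refl) (simp add: algebra_simps)
  also have "\<dots> = c * tmul n r e u" unfolding tmul_def by (simp add: sum_distrib_left)
  finally show "tmul n (tscale c r) e u = tscale c (tmul n r e) u" by (simp add: tscale_def)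
qed

theorem lemma3p3:
  fixes n :: nat
  assumes "n \<ge> 1"
  shows "bij_betw (\<lambda>r. tmul n r (eH n)) (SymC n) ((\<lambda>r. tmul n r (eH n)) ` SymC n)
    \<and> (\<forall>r\<in>SymC n. \<forall>s\<in>SymC n.
          tmul n (tadd r s) (eH n) = tadd (tmul n r (eH n)) (tmul n s (eH n)))
    \<and> (\<forall>c. \<forall>r\<in>SymC n. tmul n (tscale c r) (eH n) = tscale c (tmul n r (eH n)))
    \<and> (\<forall>r\<in>SymC n. \<forall>s\<in>SymC n.
          tmul n (tmul n r s) (eH n) = tmul n (tmul n r (eH n)) (tmul n s (eH n)))
    \<and> tmul n (tone n) (eH n) = eH n"
proof -
  have n: "1 \<le> n" using assms by simp
  let ?e = "eH n"
  have inj: "inj_on (\<lambda>r. tmul n r ?e) (SymC n)"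
  proof (rule inj_onI)
    fix r s assume r: "r \<in> SymC n" and s: "s \<in> SymC n" and eq: "tmul n r ?e = tmul n s ?e"
    have z: "op n r (op n ?e z) = op n s (op n ?e z)" for z
      using arg_cong[OF eq, of "\<lambda>x. op n x z"] by (simp add: op_tmul)
    have \<rho>: "phi n r u u = phi n s u u" if u: "u \<in> bwords n" for u
    proof -
      have "op n r (xk n (wt u)) u = op n s (xk n (wt u)) u"
        using z[of "xk n (wt u)"] op_eH_xk[OF n] by simp
      then show ?thesis using u by (simp add: op_SymC[OF r] op_SymC[OF s] Dg_def xk_def)
    qed
    have "op n r z = op n s z" for z
      by (simp add: op_SymC[OF r] op_SymC[OF s] Dg_def \<rho> fun_eq_iff)
    then show "r = s" using op_inj[OF SymC_tc[OF r] SymC_tc[OF s]] by blast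
  qed
  have mult: "tmul n (tmul n r s) ?e = tmul n (tmul n r ?e) (tmul n s ?e)" if r: "r \<in> SymC n" and s: "s \<in> SymC n" for r s
  proof (rule op_inj[OF tmul_tc tmul_tc])
    fix z
    have "op n (tmul n (tmul n r ?e) (tmul n s ?e)) z = op n r (op n ?e (Dg n (\<lambda>u. phi n s u u) (op n ?e z)))"
      by (simp add: op_tmul op_SymC[OF s])
    also have "\<dots> = op n r (Dg n (\<lambda>u. phi n s u u) (op n ?e (op n ?e z)))"
      by (simp add: op_eH_Dg[OF n swinv_SymC[OF s]])
    also have "\<dots> = op n r (op n s (op n ?e z))"
      by (simp add: op_eH_idem[OF n] op_SymC[OF s])
    also have "\<dots> = op n (tmul n (tmul n r s) ?e) z" by (simp add: op_tmul)
    finally show "op n (tmul n (tmul n r s) ?e) z = op n (tmul n (tmul n r ?e) (tmul n s ?e)) z" by simp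
  qed
  have unit: "tmul n (tone n) ?e = ?e"
  proof (rule op_inj[OF tmul_tc eH_tc])
    fix z
    show "op n (tmul n (tone n) ?e) z = op n ?e z"
      by (simp add: op_tmul op_tone restr_supp[OF supp_op])
  qed
  show ?thesis
    using inj_on_imp_bij_betw[OF inj] mult unit by (simp add: tmul_tadd tmul_tscale)
qed

end
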